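(* Let $L=\{0,u,v,u+v\}\subseteq\mathbb F_2^n$ be a two-dimensional linear subspace whose three nonzero elements all have the same Hamming weight $k$. Let $|D_L\rangle=3^{-1/2}\sum_{x\in L\setminus\{0\}}|x\rangle$, $|\psi_L\rangle=\alpha|0^n\rangle+\beta|D_L\rangle$ with $\alpha,\beta>0$, $\alpha^2+\beta^2=1$, $r=\alpha/\beta$, and $\rho_L(\gamma)=\mathcal E_\gamma^{\otimes n}(|\psi_L\rangle\langle\psi_L|)$, $q=1-\gamma$. Then $$\rho_L(\gamma)=p_{\mathbf0}|0^n\rangle\langle0^n|+p_L|D_L\rangle\langle D_L|+c_L\bigl(|0^n\rangle\langle D_L|+|D_L\rangle\langle0^n|\bigr)+\Omega_L(\gamma),$$ with $p_{\mathbf0}=\alpha^2+\beta^2\gamma^k$, $p_L=\beta^2q^k$, $c_L=\alpha\beta q^{k/2}$, and $\Omega_L(\gamma)$ a nonnegative combination of density matrices of pure stabilizer states, supported on computational-basis states of Hamming weights $1,\dots,k-1$. Moreover $\rho_L(\gamma)\in\mathcal S$ if and only if $p_{\mathbf0}\ge p_L/3$ and $c_L\le p_L/\sqrt3$. Consequently, if $0<r<1/\sqrt3$, then for $\gamma\in[0,1]$: $\rho_L(\gamma)\in\mathcal S$ iff $\gamma\in[\gamma_-,\gamma_+]$ or $\gamma=1$, where $\gamma_+=1-(\sqrt3\,r)^{2/k}$ and $\gamma_-$ is the unique root in $(0,\gamma_+)$ of $r^2+\gamma^k=(1-\gamma)^k/3$. For $n=3$, $k=2$ this gives $\gamma_-=(\sqrt{3-6r^2}-1)/2$,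 $\gamma_+=1-\sqrt3\,r$.
   Context: $\mathcal E_\gamma$ is single-qubit amplitude damping with Kraus operators $|0\rangle\langle0|+\sqrt{1-\gamma}|1\rangle\langle1|$ and $\sqrt\gamma|0\rangle\langle1|$. $\mathcal S$ is the $n$-qubit stabilizer polytope (convex hull of the density matrices of pure stabilizer states $C|0^n\rangle$, $C$ an $n$-qubit Clifford unitary). Bit strings in $\{0,1\}^n$ are identified with $\mathbb F_2^n$. *)

theory Defs
  imports Complex_Main
begin

text \<open>An n-qubit operator is a function nat => nat => complex whose
  entries at row/column indices in {..<2^n} are the relevant ones; an n-qubit
  (ket) vector is a function nat => complex on {..<2^n}. A computational basis
  index x < 2^n is identified with the bit string (bit x 0, ..., bit x (n-1))
  in F_2^n; addition in F_2^n is xor.\<close>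

definition mat_eq :: "nat \<Rightarrow> (nat \<Rightarrow> nat \<Rightarrow> complex) \<Rightarrow> (nat \<Rightarrow> nat \<Rightarrow> complex) \<Rightarrow> bool" where
  "mat_eq N A B \<longleftrightarrow> (\<forall>i<N. \<forall>j<N. A i j = B i j)"

definition mmul :: "nat \<Rightarrow> (nat \<Rightarrow> nat \<Rightarrow> complex) \<Rightarrow> (nat \<Rightarrow> nat \<Rightarrow> complex) \<Rightarrow> (nat \<Rightarrow> nat \<Rightarrow> complex)" where
  "mmul N A B = (\<lambda>i j. \<Sum>l<N. A i l * B l j)"

definition adj :: "(nat \<Rightarrow> nat \<Rightarrow> complex) \<Rightarrow> (nat \<Rightarrow> nat \<Rightarrow> complex)" where
  "adj A = (\<lambda>i j. cnj (A j i))"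

definition idm :: "nat \<Rightarrow> nat \<Rightarrow> complex" where
  "idm = (\<lambda>i j. if i = j then 1 else 0)"

definition proj :: "(nat \<Rightarrow> complex) \<Rightarrow> (nat \<Rightarrow> nat \<Rightarrow> complex)" where
  "proj \<psi> = (\<lambda>x y. \<psi> x * cnj (\<psi> y))"

definition ket :: "nat \<Rightarrow> nat \<Rightarrow> complex" where
  "ket z = (\<lambda>x. if x = z then 1 else 0)"

definition hw :: "nat \<Rightarrow> nat \<Rightarrow> nat" where
  "hw n x = card {i. i < n \<and> bit x i}"

definition tensor :: "nat \<Rightarrow> (nat \<Rightarrow> bool \<Rightarrow> bool \<Rightarrow> complex) \<Rightarrow> (nat \<Rightarrow> nat \<Rightarrow> complex)" where
  "tensor n f = (\<lambda>x y. \<Prod>i<n. f i (bit x i) (bit y i))"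

text \<open>Single-qubit Paulis: 0 = I, 1 = X, 2 = Y, 3 = Z (row bit, column bit).\<close>
definition pauli1 :: "nat \<Rightarrow> bool \<Rightarrow> bool \<Rightarrow> complex" where
  "pauli1 s a b =
     (if s = 0 then (if a = b then 1 else 0)
      else if s = 1 then (if a = b then 0 else 1)
      else if s = 2 then (if a = b then 0 else if a then \<i> else - \<i>)
      else (if a = b then (if a then -1 else 1) else 0))"

definition pauli_group :: "nat \<Rightarrow> (nat \<Rightarrow> nat \<Rightarrow> complex) set" where
  "pauli_group n = {P. \<exists>c s. c \<in> {1, -1, \<i>, - \<i>} \<and> (\<forall>i<n. s i < 4) \<and>
      mat_eq (2^n) P (\<lambda>x y. c * tensor n (\<lambda>i. pauli1 (s i)) x y)}"

definition clifford :: "nat \<Rightarrow> (nat \<Rightarrow> nat \<Rightarrow> complex) set" where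
  "clifford n = {U. mat_eq (2^n) (mmul (2^n) U (adj U)) idm \<and>
      (\<forall>P\<in>pauli_group n. mmul (2^n) (mmul (2^n) U P) (adj U) \<in> pauli_group n)}"

definition stab_state :: "nat \<Rightarrow> (nat \<Rightarrow> complex) \<Rightarrow> bool" where
  "stab_state n \<psi> \<longleftrightarrow> (\<exists>U\<in>clifford n. \<forall>x<2^n. \<psi> x = U x 0)"

definition stab_cone_on :: "nat \<Rightarrow> nat set \<Rightarrow> (nat \<Rightarrow> nat \<Rightarrow> complex) \<Rightarrow> bool" where
  "stab_cone_on n W \<Omega> \<longleftrightarrow> (\<exists>m (w :: nat \<Rightarrow> real) \<phi>.
      (\<forall>j<m. w j \<ge> 0 \<and> stab_state n (\<phi> j) \<and> (\<forall>x<2^n. \<phi> j x \<noteq> 0 \<longrightarrow> x \<in> W)) \<and>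
      mat_eq (2^n) \<Omega> (\<lambda>x y. \<Sum>j<m. complex_of_real (w j) * proj (\<phi> j) x y))"

definition stab_polytope :: "nat \<Rightarrow> (nat \<Rightarrow> nat \<Rightarrow> complex) set" where
  "stab_polytope n = {\<rho>. \<exists>m (w :: nat \<Rightarrow> real) \<phi>.
      (\<forall>j<m. w j \<ge> 0 \<and> stab_state n (\<phi> j)) \<and> (\<Sum>j<m. w j) = 1 \<and>
      mat_eq (2^n) \<rho> (\<lambda>x y. \<Sum>j<m. complex_of_real (w j) * proj (\<phi> j) x y)}"

text \<open>Amplitude damping Kraus operators: K_False = |0><0| + sqrt(1-g)|1><1|,
  K_True = sqrt g |0><1|.\<close>
definition ad_kraus :: "real \<Rightarrow> bool \<Rightarrow> bool \<Rightarrow> bool \<Rightarrow> complex" where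
  "ad_kraus g t a b =
     (if \<not> t then (if a = b then (if a then complex_of_real (sqrt (1 - g)) else 1) else 0)
      else (if \<not> a \<and> b then complex_of_real (sqrt g) else 0))"

definition ad_channel :: "nat \<Rightarrow> real \<Rightarrow> (nat \<Rightarrow> nat \<Rightarrow> complex) \<Rightarrow> (nat \<Rightarrow> nat \<Rightarrow> complex)" where
  "ad_channel n g \<rho> = (\<lambda>x y. \<Sum>(t::nat)<2^n.
      (let Kt = tensor n (\<lambda>i. ad_kraus g (bit t i)) in
         mmul (2^n) (mmul (2^n) Kt \<rho>) (adj Kt) x y))"

definition D_L :: "nat \<Rightarrow> nat \<Rightarrow> nat \<Rightarrow> complex" where
  "D_L u v = (\<lambda>x. complex_of_real (1 / sqrt 3) * (ket u x + ket v x + ket (xor u v) x))"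

definition psi_L :: "nat \<Rightarrow> nat \<Rightarrow> real \<Rightarrow> real \<Rightarrow> nat \<Rightarrow> complex" where
  "psi_L u v a b = (\<lambda>x. complex_of_real a * ket 0 x + complex_of_real b * D_L u v x)"

definition rho_L :: "nat \<Rightarrow> nat \<Rightarrow> nat \<Rightarrow> real \<Rightarrow> real \<Rightarrow> real \<Rightarrow> (nat \<Rightarrow> nat \<Rightarrow> complex)" where
  "rho_L n u v a b g = ad_channel n g (proj (psi_L u v a b))"

end

theory Submission
  imports Defs "Jordan_Normal_Form.Determinant"
begin

unbundle bit_operations_syntax

lemma bit_lt_high: "(x::nat) < 2^n \<Longrightarrow> n \<le> i \<Longrightarrow> \<not> bit x i"
  by (metis bit_take_bit_iff leD take_bit_nat_eq_self_iff)

lemma nat_eq_bits: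
  assumes "(x::nat) < 2^n" "y < 2^n" "\<forall>i<n. bit x i = bit y i"
  shows "x = y"
proof (rule bit_eqI)
  fix i show "bit x i = bit y i"
    using assms bit_lt_high[of x n i] bit_lt_high[of y n i] by (cases "i < n") auto
qed

lemma bit_pow_add:
  assumes "(t::nat) < 2^n"
  shows "bit (2^n + t) i = (if i = n then True else bit t i)"
proof -
  have "2^n + t = t OR 2^n"
    by (metis add.commute assms bit_lt_high disjunctive_add or.commute bit_exp_iff
          and_exp_eq_0_iff_not_bit bit_and_iff linorder_le_less_linear order.refl)
  then show ?thesis
    using assms bit_lt_high[of t n n] by (auto simp: bit_or_iff bit_exp_iff)
qed

lemma lt_pow_add: "(t::nat) < 2^n \<Longrightarrow> 2^n + t < 2^Suc n" by simp

lemma sum_bits_prod: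
  fixes f :: "nat \<Rightarrow> bool \<Rightarrow> 'a::comm_semiring_1"
  shows "(\<Sum>t<(2::nat)^n. \<Prod>i<n. f i (bit t i)) = (\<Prod>i<n. f i False + f i True)"
proof (induction n arbitrary: f)
  case 0 show ?case by simp
next
  case (Suc n)
  have split: "{..<(2::nat)^Suc n} = {..<2^n} \<union> (\<lambda>t. 2^n + t) ` {..<2^n}"
  proof -
    { fix t :: nat assume "t < 2^Suc n" "\<not> t < 2^n"
      then have "t \<in> (\<lambda>t. 2^n + t) ` {..<2^n}"
        by (intro image_eqI[of _ _ "t - 2^n"]) auto }
    then show ?thesis by auto
  qed
  have disj: "{..<(2::nat)^n} \<inter> (\<lambda>t. 2^n + t) ` {..<2^n} = {}" by auto
  have "(\<Sum>t::nat<2^Suc n. \<Prod>i<Suc n. f i (bit t i))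
      = (\<Sum>t::nat<2^n. \<Prod>i<Suc n. f i (bit t i)) + (\<Sum>t::nat<2^n. \<Prod>i<Suc n. f i (bit (2^n + t) i))"
    unfolding split by (subst sum.union_disjoint) (auto simp: disj sum.reindex inj_on_def)
  also have "(\<Sum>t::nat<2^n. \<Prod>i<Suc n. f i (bit t i)) = (\<Sum>t::nat<2^n. \<Prod>i<n. f i (bit t i)) * f n False"
    by (simp add: sum_distrib_right bit_lt_high)
  also have "(\<Sum>t::nat<2^n. \<Prod>i<Suc n. f i (bit (2^n + t) i)) = (\<Sum>t::nat<2^n. \<Prod>i<n. f i (bit t i)) * f n True"
    by (auto simp: sum_distrib_right bit_pow_add intro!: sum.cong prod.cong)
  finally show ?case using Suc by (simp add: distrib_right mult.commute)
qed

definition mm2 :: "(bool \<Rightarrow> bool \<Rightarrow> complex) \<Rightarrow> (bool \<Rightarrow> bool \<Rightarrow> complex) \<Rightarrow> bool \<Rightarrow> bool \<Rightarrow> complex" where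
  "mm2 a b = (\<lambda>p q. a p False * b False q + a p True * b True q)"

definition adj2 :: "(bool \<Rightarrow> bool \<Rightarrow> complex) \<Rightarrow> bool \<Rightarrow> bool \<Rightarrow> complex" where
  "adj2 a = (\<lambda>p q. cnj (a q p))"

definition smat :: "complex \<Rightarrow> ('a \<Rightarrow> 'a \<Rightarrow> complex) \<Rightarrow> 'a \<Rightarrow> 'a \<Rightarrow> complex" where
  "smat c A = (\<lambda>x y. c * A x y)"

definition id2 :: "bool \<Rightarrow> bool \<Rightarrow> complex" where
  "id2 = (\<lambda>p q. if p = q then 1 else 0)"

lemma mmul_tensor: "mmul (2^n) (tensor n f) (tensor n g) = tensor n (\<lambda>i. mm2 (f i) (g i))"
proof (intro ext)
  fix x y
  have "mmul (2^n) (tensor n f) (tensor n g) x y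
      = (\<Sum>l::nat<2^n. \<Prod>i<n. f i (bit x i) (bit l i) * g i (bit l i) (bit y i))"
    by (simp add: mmul_def tensor_def prod.distrib)
  also have "\<dots> = (\<Prod>i<n. f i (bit x i) False * g i False (bit y i) + f i (bit x i) True * g i True (bit y i))"
    by (rule sum_bits_prod[where f = "\<lambda>i b. f i (bit x i) b * g i b (bit y i)"])
  also have "\<dots> = tensor n (\<lambda>i. mm2 (f i) (g i)) x y"
    by (simp add: tensor_def mm2_def)
  finally show "mmul (2^n) (tensor n f) (tensor n g) x y = tensor n (\<lambda>i. mm2 (f i) (g i)) x y" .
qed

lemma adj_tensor: "adj (tensor n f) = tensor n (\<lambda>i. adj2 (f i))"
  by (simp add: adj_def tensor_def adj2_def cnj_prod)

lemma tensor_smat: "tensor n (\<lambda>i. smat (c i) (f i)) = smat (\<Prod>i<n. c i) (tensor n f)"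
  by (simp add: tensor_def smat_def prod.distrib fun_eq_iff)

lemma mmul_smat_left: "mmul N (smat c A) B = smat c (mmul N A B)"
  by (simp add: mmul_def smat_def sum_distrib_left mult.assoc fun_eq_iff)
lemma mmul_smat_right: "mmul N A (smat c B) = smat c (mmul N A B)"
  by (simp add: mmul_def smat_def sum_distrib_left mult.left_commute fun_eq_iff)
lemma adj_smat: "adj (smat c A) = smat (cnj c) (adj A)"
  by (simp add: adj_def smat_def fun_eq_iff)
lemma smat_smat: "smat c (smat d A) = smat (c * d) A"
  by (simp add: smat_def fun_eq_iff)
lemma smat_1: "smat 1 A = A"
  by (simp add: smat_def fun_eq_iff)

lemma mmul_assoc: "mmul N (mmul N A B) C = mmul N A (mmul N B C)"
proof (intro ext)
  fix i j
  have "mmul N (mmul N A B) C i j = (\<Sum>l<N. \<Sum>l'<N. A i l' * B l' l * C l j)"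
    by (simp add: mmul_def sum_distrib_right)
  also have "\<dots> = (\<Sum>l'<N. \<Sum>l<N. A i l' * B l' l * C l j)" by (rule sum.swap)
  also have "\<dots> = mmul N A (mmul N B C) i j"
    by (simp add: mmul_def sum_distrib_left mult.assoc)
  finally show "mmul N (mmul N A B) C i j = mmul N A (mmul N B C) i j" .
qed

lemma adj_mmul: "adj (mmul N A B) = mmul N (adj B) (adj A)"
  by (simp add: adj_def mmul_def fun_eq_iff mult.commute)

lemma adj_adj[simp]: "adj (adj A) = A"
  by (simp add: adj_def fun_eq_iff)

lemma mmul_idm_left: "i < N \<Longrightarrow> mmul N idm A i j = A i j"
proof -
  assume "i < N"
  have "mmul N idm A i j = (\<Sum>l<N. if i = l then A l j else 0)"
    unfolding mmul_def idm_def by (rule sum.cong) auto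
  then show ?thesis using \<open>i < N\<close> by simp
qed
lemma mmul_idm_right: "j < N \<Longrightarrow> mmul N A idm i j = A i j"
  by (simp add: mmul_def idm_def if_distrib cong: if_cong)

lemma mmul_cong_right: "mat_eq N B B' \<Longrightarrow> i < N \<Longrightarrow> j < N \<Longrightarrow> mmul N A B i j = mmul N A B' i j"
  by (simp add: mmul_def mat_eq_def)
lemma mmul_cong_left: "mat_eq N A A' \<Longrightarrow> i < N \<Longrightarrow> j < N \<Longrightarrow> mmul N A B i j = mmul N A' B i j"
  by (simp add: mmul_def mat_eq_def)

lemma mat_eq_trans: "mat_eq N A B \<Longrightarrow> mat_eq N B C \<Longrightarrow> mat_eq N A C"
  by (simp add: mat_eq_def)
lemma mat_eq_sym: "mat_eq N A B \<Longrightarrow> mat_eq N B A"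
  by (simp add: mat_eq_def)
lemma mat_eq_refl: "mat_eq N A A"
  by (simp add: mat_eq_def)

lemma conj_cong: "mat_eq N P P' \<Longrightarrow> mat_eq N (mmul N (mmul N U P) (adj U)) (mmul N (mmul N U P') (adj U))"
  unfolding mat_eq_def mmul_def by (auto intro!: sum.cong)

lemma prod_if_zero: "(\<Prod>i<(n::nat). if P i then g i else (0::'a::comm_semiring_1)) = (if \<forall>i<n. P i then \<Prod>i<n. g i else 0)"
  by (induction n arbitrary: P) (auto simp: less_Suc_eq)

lemma tensor_id2: "x < 2^n \<Longrightarrow> y < 2^n \<Longrightarrow> tensor n (\<lambda>i. id2) x y = idm x y"
  using nat_eq_bits[of x n y]
  by (auto simp: tensor_def id2_def idm_def prod_if_zero)

definition phases :: "complex set" where "phases = {1, -1, \<i>, - \<i>}"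
definition sg :: "bool \<Rightarrow> complex" where "sg b = (if b then -1 else 1)"
definition xzm :: "bool \<Rightarrow> bool \<Rightarrow> bool \<Rightarrow> bool \<Rightarrow> complex" where
  "xzm a b = (\<lambda>p q. if q = (p \<noteq> a) then sg (b \<and> q) else 0)"
definition pxz :: "nat \<Rightarrow> complex \<Rightarrow> (nat \<Rightarrow> bool) \<Rightarrow> (nat \<Rightarrow> bool) \<Rightarrow> nat \<Rightarrow> nat \<Rightarrow> complex" where
  "pxz n c A B = smat c (tensor n (\<lambda>i. xzm (A i) (B i)))"
definition ph :: "nat \<Rightarrow> complex" where "ph s = (if s = 2 then \<i> else 1)"

lemma phases_mult: "a \<in> phases \<Longrightarrow> b \<in> phases \<Longrightarrow> a * b \<in> phases"
  by (auto simp: phases_def)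
lemma phases_cnj: "a \<in> phases \<Longrightarrow> cnj a \<in> phases"
  by (auto simp: phases_def)
lemma phases_1: "1 \<in> phases" by (simp add: phases_def)
lemma sg_phases: "sg b \<in> phases" by (simp add: phases_def sg_def)
lemma ph_phases: "ph s \<in> phases" by (simp add: phases_def ph_def)
lemma phases_cnj_mult: "a \<in> phases \<Longrightarrow> cnj a * a = 1"
  by (auto simp: phases_def)
lemma phases_prod: "(\<forall>i<n. c i \<in> phases) \<Longrightarrow> (\<Prod>i<(n::nat). c i) \<in> phases"
  by (induction n) (auto simp: phases_1 phases_mult)

lemma tensor_cong: "(\<And>i. i < n \<Longrightarrow> f i = g i) \<Longrightarrow> tensor n f = tensor n g"
  by (simp add: tensor_def fun_eq_iff)

lemma pauli1_xzm: "s < 4 \<Longrightarrow> pauli1 s = smat (ph s) (xzm (s = 1 \<or> s = 2) (s = 2 \<or> s = 3))"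
  by (auto simp: pauli1_def smat_def xzm_def ph_def sg_def fun_eq_iff numeral_eq_Suc less_Suc_eq)

lemma pg_iff: "P \<in> pauli_group n \<longleftrightarrow> (\<exists>c\<in>phases. \<exists>A B. mat_eq (2^n) P (pxz n c A B))"
proof
  assume "P \<in> pauli_group n"
  then obtain c s where c: "c \<in> {1, -1, \<i>, - \<i>}" and s: "\<forall>i<n. s i < 4"
    and eq: "mat_eq (2^n) P (\<lambda>x y. c * tensor n (\<lambda>i. pauli1 (s i)) x y)"
    unfolding pauli_group_def by blast
  have "tensor n (\<lambda>i. pauli1 (s i)) = tensor n (\<lambda>i. smat (ph (s i)) (xzm (s i = 1 \<or> s i = 2) (s i = 2 \<or> s i = 3)))"
    using s by (intro tensor_cong) (simp add: pauli1_xzm)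
  also have "\<dots> = smat (\<Prod>i<n. ph (s i)) (tensor n (\<lambda>i. xzm (s i = 1 \<or> s i = 2) (s i = 2 \<or> s i = 3)))"
    by (rule tensor_smat)
  finally have "(\<lambda>x y. c * tensor n (\<lambda>i. pauli1 (s i)) x y)
      = pxz n (c * (\<Prod>i<n. ph (s i))) (\<lambda>i. s i = 1 \<or> s i = 2) (\<lambda>i. s i = 2 \<or> s i = 3)"
    by (simp add: pxz_def smat_def fun_eq_iff mult.assoc)
  moreover have "c * (\<Prod>i<n. ph (s i)) \<in> phases"
  proof -
    have c': "c \<in> phases" using c unfolding phases_def .
    have "(\<Prod>i<n. ph (s i)) \<in> phases" by (rule phases_prod) (simp add: ph_phases)
    then show ?thesis using c' by (rule phases_mult[rotated])
  qed
  ultimately show "\<exists>c\<in>phases. \<exists>A B. mat_eq (2^n) P (pxz n c A B)" using eq by (intro bexI exI) auto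
next
  assume "\<exists>c\<in>phases. \<exists>A B. mat_eq (2^n) P (pxz n c A B)"
  then obtain c A B where c: "c \<in> phases" and eq: "mat_eq (2^n) P (pxz n c A B)" by blast
  define s where "s i = (if A i then (if B i then 2 else 1) else (if B i then 3 else 0::nat))" for i
  have s4: "\<forall>i<n. s i < 4" by (simp add: s_def)
  have xz: "xzm (A i) (B i) = smat (cnj (ph (s i))) (pauli1 (s i))" for i
  proof -
    have "pauli1 (s i) = smat (ph (s i)) (xzm (A i) (B i))"
      by (subst pauli1_xzm) (auto simp: s_def)
    then show ?thesis using phases_cnj_mult[OF ph_phases[of "s i"]]
      by (simp add: smat_smat smat_1)
  qed
  have pe: "pxz n c A B = (\<lambda>x y. (c * (\<Prod>i<n. cnj (ph (s i)))) * tensor n (\<lambda>i. pauli1 (s i)) x y)"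
    unfolding pxz_def xz tensor_smat by (simp add: smat_def fun_eq_iff mult.assoc)
  have ph: "c * (\<Prod>i<n. cnj (ph (s i))) \<in> {1, -1, \<i>, - \<i>}"
  proof -
    have "(\<Prod>i<n. cnj (ph (s i))) \<in> phases" by (rule phases_prod) (simp add: ph_phases phases_cnj)
    then show ?thesis using phases_mult[OF c] unfolding phases_def by blast
  qed
  show "P \<in> pauli_group n"
    unfolding pauli_group_def
    apply (rule CollectI)
    apply (rule exI[of _ "c * (\<Prod>i<n. cnj (ph (s i)))"])
    apply (rule exI[of _ s])
    using ph s4 eq unfolding pe by blast
qed

lemma pg_mat_eq: "P \<in> pauli_group n \<Longrightarrow> mat_eq (2^n) P Q \<Longrightarrow> Q \<in> pauli_group n"
  unfolding pg_iff by (meson mat_eq_sym mat_eq_trans)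

lemma pg_smat: "c \<in> phases \<Longrightarrow> P \<in> pauli_group n \<Longrightarrow> smat c P \<in> pauli_group n"
proof -
  assume c: "c \<in> phases" and "P \<in> pauli_group n"
  then obtain d A B where d: "d \<in> phases" and eq: "mat_eq (2^n) P (pxz n d A B)"
    unfolding pg_iff by blast
  have "mat_eq (2^n) (smat c P) (pxz n (c * d) A B)"
    using eq by (simp add: mat_eq_def smat_def pxz_def mult.assoc)
  then show ?thesis unfolding pg_iff using c d phases_mult by blast
qed

lemma pxz_pg: "c \<in> phases \<Longrightarrow> pxz n c A B \<in> pauli_group n"
  unfolding pg_iff using mat_eq_refl by blast

lemma clifford_intro:
  assumes U: "mat_eq (2^n) (mmul (2^n) U (adj U)) idm"
    and conj: "\<And>A B. mmul (2^n) (mmul (2^n) U (tensor n (\<lambda>i. xzm (A i) (B i)))) (adj U) \<in> pauli_group n"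
  shows "U \<in> clifford n"
  unfolding clifford_def
proof (intro CollectI conjI ballI U)
  fix P assume "P \<in> pauli_group n"
  then obtain c A B where c: "c \<in> phases" and eq: "mat_eq (2^n) P (pxz n c A B)"
    unfolding pg_iff by blast
  have "mmul (2^n) (mmul (2^n) U (pxz n c A B)) (adj U)
      = smat c (mmul (2^n) (mmul (2^n) U (tensor n (\<lambda>i. xzm (A i) (B i)))) (adj U))"
    by (simp add: pxz_def mmul_smat_left mmul_smat_right)
  then have "mmul (2^n) (mmul (2^n) U (pxz n c A B)) (adj U) \<in> pauli_group n"
    using pg_smat[OF c conj] by simp
  then show "mmul (2^n) (mmul (2^n) U P) (adj U) \<in> pauli_group n"
    using conj_cong[OF eq] pg_mat_eq mat_eq_sym by blast
qed

lemma local_clifford: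
  assumes unit: "\<And>i. i < n \<Longrightarrow> mm2 (g i) (adj2 (g i)) = id2"
    and cj: "\<And>i a b. i < n \<Longrightarrow> \<exists>\<sigma>\<in>phases. \<exists>a' b'. mm2 (mm2 (g i) (xzm a b)) (adj2 (g i)) = smat \<sigma> (xzm a' b')"
  shows "tensor n g \<in> clifford n"
proof (rule clifford_intro)
  have "mmul (2^n) (tensor n g) (adj (tensor n g)) = tensor n (\<lambda>i. id2)"
    unfolding adj_tensor mmul_tensor by (rule tensor_cong) (simp add: unit)
  then show "mat_eq (2^n) (mmul (2^n) (tensor n g) (adj (tensor n g))) idm"
    by (simp add: mat_eq_def tensor_id2)
next
  fix A B :: "nat \<Rightarrow> bool"
  have "\<forall>i. \<exists>\<sigma> a' b'. i < n \<longrightarrow> \<sigma> \<in> phases \<and> mm2 (mm2 (g i) (xzm (A i) (B i))) (adj2 (g i)) = smat \<sigma> (xzm a' b')"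
    using cj by blast
  then obtain \<sigma> a' b' where H: "\<And>i. i < n \<Longrightarrow> \<sigma> i \<in> phases \<and> mm2 (mm2 (g i) (xzm (A i) (B i))) (adj2 (g i)) = smat (\<sigma> i) (xzm (a' i) (b' i))"
    by metis
  have "mmul (2^n) (mmul (2^n) (tensor n g) (tensor n (\<lambda>i. xzm (A i) (B i)))) (adj (tensor n g))
      = tensor n (\<lambda>i. smat (\<sigma> i) (xzm (a' i) (b' i)))"
    unfolding adj_tensor mmul_tensor by (rule tensor_cong) (simp add: H)
  also have "\<dots> = pxz n (\<Prod>i<n. \<sigma> i) a' b'"
    by (simp add: tensor_smat pxz_def)
  finally show "mmul (2^n) (mmul (2^n) (tensor n g) (tensor n (\<lambda>i. xzm (A i) (B i)))) (adj (tensor n g)) \<in> pauli_group n"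
    using pxz_pg phases_prod H by metis
qed

definition pdg :: "(nat \<Rightarrow> nat) \<Rightarrow> (nat \<Rightarrow> complex) \<Rightarrow> nat \<Rightarrow> nat \<Rightarrow> complex" where
  "pdg \<pi> d = (\<lambda>x y. if y = \<pi> x then d x else 0)"

lemma pdg_conj:
  assumes "x < 2^n" "y < 2^n" "\<forall>x<2^n. \<pi> x < (2::nat)^n"
  shows "mmul (2^n) (mmul (2^n) (pdg \<pi> d) P) (adj (pdg \<pi> d)) x y = d x * cnj (d y) * P (\<pi> x) (\<pi> y)"
proof -
  have 1: "mmul (2^n) (pdg \<pi> d) P x l = d x * P (\<pi> x) l" for l
  proof -
    have "mmul (2^n) (pdg \<pi> d) P x l = (\<Sum>m<2^n. if m = \<pi> x then d x * P m l else 0)"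
      unfolding mmul_def pdg_def by (rule sum.cong) auto
    then show ?thesis using assms by simp
  qed
  have "mmul (2^n) (mmul (2^n) (pdg \<pi> d) P) (adj (pdg \<pi> d)) x y
     = (\<Sum>l<2^n. mmul (2^n) (pdg \<pi> d) P x l * adj (pdg \<pi> d) l y)"
    by (simp add: mmul_def[of _ "mmul _ _ _"])
  also have "\<dots> = (\<Sum>l<2^n. if l = \<pi> y then d x * P (\<pi> x) l * cnj (d y) else 0)"
  proof (rule sum.cong)
    fix l
    have "adj (pdg \<pi> d) l y = (if l = \<pi> y then cnj (d y) else 0)" by (simp add: adj_def pdg_def)
    then show "mmul (2^n) (pdg \<pi> d) P x l * adj (pdg \<pi> d) l y = (if l = \<pi> y then d x * P (\<pi> x) l * cnj (d y) else 0)"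
      by (simp only: 1) simp
  qed simp
  finally have "mmul (2^n) (mmul (2^n) (pdg \<pi> d) P) (adj (pdg \<pi> d)) x y
     = (\<Sum>l<2^n. if l = \<pi> y then d x * P (\<pi> x) l * cnj (d y) else 0)" .
  then show ?thesis using assms by (simp add: mult_ac)
qed

lemma pdg_clifford:
  assumes pi_lt: "\<forall>x<2^n. \<pi> x < (2::nat)^n" and inv: "\<forall>x<2^n. \<pi> (\<pi> x) = x"
    and d1: "\<forall>x. d x * cnj (d x) = 1"
    and cj: "\<And>A B. \<exists>\<sigma>\<in>phases. \<exists>A' B'. \<forall>x<2^n. \<forall>y<2^n.
        d x * cnj (d y) * tensor n (\<lambda>i. xzm (A i) (B i)) (\<pi> x) (\<pi> y) = \<sigma> * tensor n (\<lambda>i. xzm (A' i) (B' i)) x y"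
  shows "pdg \<pi> d \<in> clifford n"
proof (rule clifford_intro)
  show "mat_eq (2^n) (mmul (2^n) (pdg \<pi> d) (adj (pdg \<pi> d))) idm"
    unfolding mat_eq_def
  proof (intro allI impI)
    fix x y :: nat assume xy: "x < 2^n" "y < 2^n"
    have "mmul (2^n) (pdg \<pi> d) (adj (pdg \<pi> d)) x y = (\<Sum>l<2^n. if l = \<pi> x then (if \<pi> x = \<pi> y then d x * cnj (d y) else 0) else 0)"
      unfolding mmul_def pdg_def adj_def by (rule sum.cong) auto
    also have "\<dots> = (if \<pi> x = \<pi> y then d x * cnj (d y) else 0)"
      using xy pi_lt by simp
    also have "\<dots> = idm x y"
      using xy inv d1 by (auto simp: idm_def) (metis)
    finally show "mmul (2^n) (pdg \<pi> d) (adj (pdg \<pi> d)) x y = idm x y" .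
  qed
next
  fix A B :: "nat \<Rightarrow> bool"
  obtain \<sigma> A' B' where s: "\<sigma> \<in> phases" and H: "\<forall>x<2^n. \<forall>y<2^n.
        d x * cnj (d y) * tensor n (\<lambda>i. xzm (A i) (B i)) (\<pi> x) (\<pi> y) = \<sigma> * tensor n (\<lambda>i. xzm (A' i) (B' i)) x y"
    using cj by blast
  have "mat_eq (2^n) (pxz n \<sigma> A' B') (mmul (2^n) (mmul (2^n) (pdg \<pi> d) (tensor n (\<lambda>i. xzm (A i) (B i)))) (adj (pdg \<pi> d)))"
    unfolding mat_eq_def using H by (simp add: pdg_conj[OF _ _ pi_lt] pxz_def smat_def)
  then show "mmul (2^n) (mmul (2^n) (pdg \<pi> d) (tensor n (\<lambda>i. xzm (A i) (B i)))) (adj (pdg \<pi> d)) \<in> pauli_group n"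
    using pg_mat_eq pxz_pg[OF s] by blast
qed

lemma sg_xor: "sg ((p \<noteq> q) \<and> y) = sg (p \<and> y) * sg (q \<and> y)"
  by (auto simp: sg_def)
lemma sg_mult: "sg p * sg q = sg (p \<noteq> q)"
  by (auto simp: sg_def)
lemma sg_cnj[simp]: "cnj (sg p) = sg p"
  by (auto simp: sg_def)
lemma sg_sq[simp]: "sg p * sg p = 1"
  by (auto simp: sg_def)
lemma sg_False[simp]: "sg False = 1" by (simp add: sg_def)

lemma prod_sg_pm1: "(\<Prod>i<(n::nat). sg (P i)) = 1 \<or> (\<Prod>i<(n::nat). sg (P i)) = -1"
  by (induction n) (auto simp: sg_def)

lemma prod_sg_pm: "(\<Prod>i<(n::nat). sg (P i)) = sg ((\<Prod>i<n. sg (P i)) = -1)"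
  using prod_sg_pm1[of P n] by (auto simp: sg_def)

lemma prod_sg_xor: "(\<Prod>i<(n::nat). sg ((P i \<noteq> Q i) \<and> Y i)) = (\<Prod>i<n. sg (P i \<and> Y i)) * (\<Prod>i<n. sg (Q i \<and> Y i))"
  by (simp only: sg_xor prod.distrib)

lemma lt_pow_bits: "(\<forall>i\<ge>n. \<not> bit (x::nat) i) \<Longrightarrow> x < 2^n"
proof -
  assume h: "\<forall>i\<ge>n. \<not> bit (x::nat) i"
  have "take_bit n x = x"
    by (rule bit_eqI) (metis bit_take_bit_iff h not_le)
  then show ?thesis by (metis take_bit_nat_less_exp)
qed

lemma xor_lt: "(x::nat) < 2^n \<Longrightarrow> y < 2^n \<Longrightarrow> x XOR y < 2^n"
  by (rule lt_pow_bits) (simp add: bit_xor_iff bit_lt_high)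

lemma xor_xor_cancel: "((x::nat) XOR a) XOR a = x"
  by (rule bit_eqI) (auto simp: bit_xor_iff)

lemma xzm_flip: "xzm A B (p \<noteq> c) (q \<noteq> c) = sg (B \<and> c) * xzm A B p q"
  by (cases A; cases B; cases c; cases p; cases q) (auto simp: xzm_def sg_def)

definition xgate :: "nat \<Rightarrow> nat \<Rightarrow> nat \<Rightarrow> complex" where
  "xgate a = pdg (\<lambda>x. x XOR a) (\<lambda>_. 1)"

lemma xgate_clifford: "a < 2^n \<Longrightarrow> xgate a \<in> clifford n"
  unfolding xgate_def
proof (rule pdg_clifford)
  assume a: "a < 2^n"
  show "\<forall>x<2^n. x XOR a < (2::nat)^n" using a xor_lt by blast
  show "\<forall>x<2^n. (x XOR a) XOR a = x" by (simp add: xor_xor_cancel)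
  show "\<forall>x::nat. (1::complex) * cnj 1 = 1" by simp
  fix A B :: "nat \<Rightarrow> bool"
  show "\<exists>\<sigma>\<in>phases. \<exists>A' B'. \<forall>x<2^n. \<forall>y<2^n.
        1 * cnj 1 * tensor n (\<lambda>i. xzm (A i) (B i)) (x XOR a) (y XOR a) = \<sigma> * tensor n (\<lambda>i. xzm (A' i) (B' i)) x y"
  proof -
    have "\<forall>x<2^n. \<forall>y<2^n. 1 * cnj 1 * tensor n (\<lambda>i. xzm (A i) (B i)) (x XOR a) (y XOR a)
        = (\<Prod>i<n. sg (B i \<and> bit a i)) * tensor n (\<lambda>i. xzm (A i) (B i)) x y"
      by (simp only: tensor_def bit_xor_iff xzm_flip prod.distrib mult_1 complex_cnj_one) simp
    moreover have "(\<Prod>i<n. sg (B i \<and> bit a i)) \<in> phases"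
      by (intro phases_prod allI impI sg_phases)
    ultimately show ?thesis by blast
  qed
qed

lemma prod_sg_delta: "(j::nat) < n \<Longrightarrow> (\<Prod>i<n. sg ((i = j \<and> a) \<and> Y i)) = sg (a \<and> Y j)"
proof -
  assume j: "j < n"
  have "(\<Prod>i<n. sg ((i = j \<and> a) \<and> Y i)) = (\<Prod>i<n. if i = j then sg (a \<and> Y j) else 1)"
    by (rule prod.cong) (auto simp: sg_def)
  also have "\<dots> = sg (a \<and> Y j)" using j by (simp add: prod.delta)
  finally show ?thesis .
qed

lemma xzm_if: "xzm a b p q = (if q = (p \<noteq> a) then sg (b \<and> q) else 0)"
  by (simp add: xzm_def)

lemma cnot_tensor_bits:
  fixes A B X Y M :: "nat \<Rightarrow> bool" and j n :: nat
  assumes j: "j < n" and Mj: "\<not> M j"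
  shows "(\<Prod>i<n. xzm (A i) (B i) (X i \<noteq> (X j \<and> M i)) (Y i \<noteq> (Y j \<and> M i)))
       = (\<Prod>i<n. xzm (A i \<noteq> (A j \<and> M i)) (B i \<noteq> (i = j \<and> ((\<Prod>i<n. sg (B i \<and> M i)) = -1))) (X i) (Y i))"
    (is "?L = ?R")
proof -
  let ?par = "(\<Prod>i<n. sg (B i \<and> M i)) = -1"
  have cond: "(\<forall>i<n. (Y i \<noteq> (Y j \<and> M i)) = ((X i \<noteq> (X j \<and> M i)) \<noteq> A i))
           \<longleftrightarrow> (\<forall>i<n. Y i = (X i \<noteq> (A i \<noteq> (A j \<and> M i))))"
  proof
    assume L: "\<forall>i<n. (Y i \<noteq> (Y j \<and> M i)) = ((X i \<noteq> (X j \<and> M i)) \<noteq> A i)"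
    have Yj: "Y j = (X j \<noteq> A j)" using L j Mj by auto
    show "\<forall>i<n. Y i = (X i \<noteq> (A i \<noteq> (A j \<and> M i)))"
    proof (intro allI impI)
      fix i assume "i < n"
      then have "(Y i \<noteq> (Y j \<and> M i)) = ((X i \<noteq> (X j \<and> M i)) \<noteq> A i)" using L by blast
      then show "Y i = (X i \<noteq> (A i \<noteq> (A j \<and> M i)))" using Yj by auto
    qed
  next
    assume R: "\<forall>i<n. Y i = (X i \<noteq> (A i \<noteq> (A j \<and> M i)))"
    have Yj: "Y j = (X j \<noteq> A j)" using R j Mj by auto
    show "\<forall>i<n. (Y i \<noteq> (Y j \<and> M i)) = ((X i \<noteq> (X j \<and> M i)) \<noteq> A i)"
    proof (intro allI impI)
      fix i assume "i < n"
      then have "Y i = (X i \<noteq> (A i \<noteq> (A j \<and> M i)))" using R by blast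
      then show "(Y i \<noteq> (Y j \<and> M i)) = ((X i \<noteq> (X j \<and> M i)) \<noteq> A i)" using Yj by auto
    qed
  qed
  have signs: "(\<Prod>i<n. sg (B i \<and> (Y i \<noteq> (Y j \<and> M i)))) = (\<Prod>i<n. sg ((B i \<noteq> (i = j \<and> ?par)) \<and> Y i))"
  proof -
    have "(\<Prod>i<n. sg (B i \<and> (Y i \<noteq> (Y j \<and> M i)))) = (\<Prod>i<n. sg (B i \<and> Y i) * sg (Y j \<and> (B i \<and> M i)))"
      by (rule prod.cong) (auto simp: sg_def)
    also have "\<dots> = (\<Prod>i<n. sg (B i \<and> Y i)) * (\<Prod>i<n. sg (Y j \<and> (B i \<and> M i)))"
      by (rule prod.distrib)
    also have "(\<Prod>i<n. sg (Y j \<and> (B i \<and> M i))) = sg (?par \<and> Y j)"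
    proof (cases "Y j")
      case True then show ?thesis using prod_sg_pm[of "\<lambda>i. B i \<and> M i" n] by simp
    next
      case False then show ?thesis by (simp add: sg_def)
    qed
    also have "sg (?par \<and> Y j) = (\<Prod>i<n. sg ((i = j \<and> ?par) \<and> Y i))"
      using prod_sg_delta[OF j] by simp
    also have "(\<Prod>i<n. sg (B i \<and> Y i)) * (\<Prod>i<n. sg ((i = j \<and> ?par) \<and> Y i))
        = (\<Prod>i<n. sg ((B i \<noteq> (i = j \<and> ?par)) \<and> Y i))"
      by (rule prod_sg_xor[symmetric])
    finally show ?thesis .
  qed
  have "?L = (if \<forall>i<n. (Y i \<noteq> (Y j \<and> M i)) = ((X i \<noteq> (X j \<and> M i)) \<noteq> A i)
              then \<Prod>i<n. sg (B i \<and> (Y i \<noteq> (Y j \<and> M i))) else 0)"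
    by (simp only: xzm_if prod_if_zero)
  also have "\<dots> = (if \<forall>i<n. Y i = (X i \<noteq> (A i \<noteq> (A j \<and> M i)))
              then \<Prod>i<n. sg ((B i \<noteq> (i = j \<and> ?par)) \<and> Y i) else 0)"
    by (simp only: cond signs)
  also have "\<dots> = ?R"
    by (simp only: xzm_if prod_if_zero)
  finally show ?thesis .
qed

definition cpi :: "nat \<Rightarrow> nat \<Rightarrow> nat \<Rightarrow> nat" where
  "cpi j m x = (if bit x j then x XOR m else x)"

definition cgate :: "nat \<Rightarrow> nat \<Rightarrow> nat \<Rightarrow> nat \<Rightarrow> complex" where
  "cgate j m = pdg (cpi j m) (\<lambda>_. 1)"

lemma bit_cpi: "\<not> bit m j \<Longrightarrow> bit (cpi j m x) i = (bit x i \<noteq> (bit x j \<and> bit m i))"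
  by (auto simp: cpi_def bit_xor_iff)

lemma cpi_lt: "x < 2^n \<Longrightarrow> m < 2^n \<Longrightarrow> cpi j m x < 2^n"
  by (simp add: cpi_def xor_lt)

lemma cpi_inv: "\<not> bit m j \<Longrightarrow> cpi j m (cpi j m x) = x"
  by (auto simp: cpi_def bit_xor_iff xor_xor_cancel)

lemma cgate_clifford:
  assumes j: "j < n" and m: "m < 2^n" and mj: "\<not> bit m j"
  shows "cgate j m \<in> clifford n"
  unfolding cgate_def
proof (rule pdg_clifford)
  show "\<forall>x<2^n. cpi j m x < (2::nat)^n" using m cpi_lt by blast
  show "\<forall>x<2^n. cpi j m (cpi j m x) = x" using mj cpi_inv by blast
  show "\<forall>x::nat. (1::complex) * cnj 1 = 1" by simp
  fix A B :: "nat \<Rightarrow> bool"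
  let ?par = "(\<Prod>i<n. sg (B i \<and> bit m i)) = -1"
  have H: "\<forall>x<2^n. \<forall>y<2^n. 1 * cnj 1 * tensor n (\<lambda>i. xzm (A i) (B i)) (cpi j m x) (cpi j m y)
      = 1 * tensor n (\<lambda>i. xzm (A i \<noteq> (A j \<and> bit m i)) (B i \<noteq> (i = j \<and> ?par))) x y"
    unfolding tensor_def bit_cpi[OF mj]
    using cnot_tensor_bits[OF j, of "\<lambda>i. bit m i"] mj by simp
  show "\<exists>\<sigma>\<in>phases. \<exists>A' B'. \<forall>x<2^n. \<forall>y<2^n.
        1 * cnj 1 * tensor n (\<lambda>i. xzm (A i) (B i)) (cpi j m x) (cpi j m y) = \<sigma> * tensor n (\<lambda>i. xzm (A' i) (B' i)) x y"
    by (rule bexI[OF _ phases_1], intro exI, rule H)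
qed

definition dgate :: "nat \<Rightarrow> nat \<Rightarrow> nat \<Rightarrow> nat \<Rightarrow> complex" where
  "dgate j l = pdg (\<lambda>x. x) (\<lambda>x. sg (\<not> bit x j \<and> \<not> bit x l))"

lemma diag_tensor_bits:
  fixes A B X Y :: "nat \<Rightarrow> bool" and j l n :: nat
  assumes j: "j < n" and l: "l < n" and jl: "j \<noteq> l"
  shows "sg (\<not> X j \<and> \<not> X l) * sg (\<not> Y j \<and> \<not> Y l) * (\<Prod>i<n. xzm (A i) (B i) (X i) (Y i))
       = sg (A j \<or> A l) * (\<Prod>i<n. xzm (A i) ((B i \<noteq> (i = j \<and> A l)) \<noteq> (i = l \<and> A j)) (X i) (Y i))"
proof (cases "\<forall>i<n. Y i = (X i \<noteq> A i)")
  case True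
  have Yj: "Y j = (X j \<noteq> A j)" and Yl: "Y l = (X l \<noteq> A l)" using True j l by auto
  have P1: "(\<Prod>i<n. sg (((B i \<noteq> (i = j \<and> A l)) \<noteq> (i = l \<and> A j)) \<and> Y i))
      = (\<Prod>i<n. sg (B i \<and> Y i)) * sg (A l \<and> Y j) * sg (A j \<and> Y l)"
    by (simp only: prod_sg_xor prod_sg_delta[OF j] prod_sg_delta[OF l])
  have P2: "sg (\<not> X j \<and> \<not> X l) * sg (\<not> Y j \<and> \<not> Y l) = sg (A j \<or> A l) * (sg (A l \<and> Y j) * sg (A j \<and> Y l))"
    unfolding Yj Yl by (cases "X j"; cases "X l"; cases "A j"; cases "A l") (auto simp: sg_def)
  have "sg (\<not> X j \<and> \<not> X l) * sg (\<not> Y j \<and> \<not> Y l) * (\<Prod>i<n. xzm (A i) (B i) (X i) (Y i))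
     = sg (\<not> X j \<and> \<not> X l) * sg (\<not> Y j \<and> \<not> Y l) * (\<Prod>i<n. sg (B i \<and> Y i))"
    by (simp only: xzm_if prod_if_zero if_P[OF True])
  also have "\<dots> = sg (A j \<or> A l) * ((\<Prod>i<n. sg (B i \<and> Y i)) * sg (A l \<and> Y j) * sg (A j \<and> Y l))"
    unfolding P2 by (simp only: mult_ac)
  also have "\<dots> = sg (A j \<or> A l) * (\<Prod>i<n. xzm (A i) ((B i \<noteq> (i = j \<and> A l)) \<noteq> (i = l \<and> A j)) (X i) (Y i))"
    by (simp only: xzm_if prod_if_zero if_P[OF True] P1)
  finally show ?thesis .
next
  case False
  then show ?thesis by (simp only: xzm_if prod_if_zero if_False mult_zero_right)
qed

lemma dgate_clifford:
  assumes j: "j < n" and l: "l < n" and jl: "j \<noteq> l"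
  shows "dgate j l \<in> clifford n"
  unfolding dgate_def
proof (rule pdg_clifford)
  show "\<forall>x<2^n. x < (2::nat)^n" by simp
  show "\<forall>x<2^n. x = (x::nat)" by simp
  show "\<forall>x. sg (\<not> bit x j \<and> \<not> bit x l) * cnj (sg (\<not> bit x j \<and> \<not> bit x l)) = 1" by simp
  fix A B :: "nat \<Rightarrow> bool"
  have H: "\<forall>x<2^n. \<forall>y<2^n. sg (\<not> bit x j \<and> \<not> bit x l) * cnj (sg (\<not> bit y j \<and> \<not> bit y l)) * tensor n (\<lambda>i. xzm (A i) (B i)) x y
      = sg (A j \<or> A l) * tensor n (\<lambda>i. xzm (A i) ((B i \<noteq> (i = j \<and> A l)) \<noteq> (i = l \<and> A j))) x y"
    unfolding tensor_def sg_cnj using diag_tensor_bits[OF j l jl] by blast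
  show "\<exists>\<sigma>\<in>phases. \<exists>A' B'. \<forall>x<2^n. \<forall>y<2^n.
        sg (\<not> bit x j \<and> \<not> bit x l) * cnj (sg (\<not> bit y j \<and> \<not> bit y l)) * tensor n (\<lambda>i. xzm (A i) (B i)) x y
        = \<sigma> * tensor n (\<lambda>i. xzm (A' i) (B' i)) x y"
    by (rule bexI[OF _ sg_phases], intro exI, rule H)
qed

definition hh :: complex where "hh = complex_of_real (1 / sqrt 2)"

lemma hh_sq: "hh * hh = 1/2"
proof -
  have "(1 / sqrt 2) * (1 / sqrt 2) = (1/2::real)" by (simp add: field_simps)
  then have "complex_of_real ((1 / sqrt 2) * (1 / sqrt 2)) = 1/2" by simp
  then show ?thesis unfolding hh_def of_real_mult .
qed
lemma hh_sq': "hh * (hh * c) = c / 2"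
  using hh_sq by (metis mult.assoc mult.commute times_divide_eq_right mult_1_right)

lemma hh_cnj[simp]: "cnj hh = hh" by (simp add: hh_def)

definition had :: "bool \<Rightarrow> bool \<Rightarrow> complex" where
  "had = (\<lambda>p q. sg (p \<and> q) * hh)"

lemma had_unit: "mm2 had (adj2 had) = id2"
  by (auto simp: fun_eq_iff mm2_def adj2_def had_def id2_def sg_def hh_sq)

lemma id2_unit: "mm2 id2 (adj2 id2) = id2"
  by (auto simp: fun_eq_iff mm2_def adj2_def id2_def)

lemma id2_conj: "mm2 (mm2 id2 (xzm a b)) (adj2 id2) = smat 1 (xzm a b)"
  by (auto simp: fun_eq_iff mm2_def adj2_def id2_def smat_def)

lemma had_conj: "mm2 (mm2 had (xzm a b)) (adj2 had) = smat (sg (a \<and> b)) (xzm b a)"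
  by (cases a; cases b) (auto simp: fun_eq_iff mm2_def adj2_def had_def smat_def xzm_def sg_def hh_sq hh_sq' algebra_simps)

definition hgate :: "nat \<Rightarrow> nat set \<Rightarrow> nat \<Rightarrow> nat \<Rightarrow> complex" where
  "hgate n S = tensor n (\<lambda>i. if i \<in> S then had else id2)"

lemma hgate_clifford: "hgate n S \<in> clifford n"
  unfolding hgate_def
proof (rule local_clifford)
  fix i show "mm2 (if i \<in> S then had else id2) (adj2 (if i \<in> S then had else id2)) = id2"
    by (simp add: had_unit id2_unit)
next
  fix i a b
  show "\<exists>\<sigma>\<in>phases. \<exists>a' b'. mm2 (mm2 (if i \<in> S then had else id2) (xzm a b)) (adj2 (if i \<in> S then had else id2)) = smat \<sigma> (xzm a' b')"
  proof (cases "i \<in> S")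
    case True then show ?thesis using had_conj sg_phases by auto
  next
    case False then show ?thesis using id2_conj phases_1 by auto
  qed
qed

lemma clifford_mmul:
  assumes U: "U \<in> clifford n" and V: "V \<in> clifford n"
  shows "mmul (2^n) U V \<in> clifford n"
proof -
  let ?N = "2^n::nat"
  have Uu: "mat_eq ?N (mmul ?N U (adj U)) idm" and Uc: "\<And>P. P \<in> pauli_group n \<Longrightarrow> mmul ?N (mmul ?N U P) (adj U) \<in> pauli_group n"
    using U by (auto simp: clifford_def)
  have Vu: "mat_eq ?N (mmul ?N V (adj V)) idm" and Vc: "\<And>P. P \<in> pauli_group n \<Longrightarrow> mmul ?N (mmul ?N V P) (adj V) \<in> pauli_group n"
    using V by (auto simp: clifford_def)
  have "mat_eq ?N (mmul ?N (mmul ?N U V) (adj (mmul ?N U V))) idm"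
    unfolding mat_eq_def
  proof (intro allI impI)
    fix i j assume ij: "i < ?N" "j < ?N"
    have "mmul ?N (mmul ?N U V) (adj (mmul ?N U V)) i j = mmul ?N U (mmul ?N (mmul ?N V (adj V)) (adj U)) i j"
      by (simp add: adj_mmul mmul_assoc)
    also have "\<dots> = mmul ?N U (mmul ?N idm (adj U)) i j"
    proof (rule mmul_cong_right[OF _ ij])
      show "mat_eq ?N (mmul ?N (mmul ?N V (adj V)) (adj U)) (mmul ?N idm (adj U))"
        unfolding mat_eq_def using Vu mmul_cong_left by blast
    qed
    also have "\<dots> = mmul ?N U (adj U) i j"
    proof (rule mmul_cong_right[OF _ ij])
      show "mat_eq ?N (mmul ?N idm (adj U)) (adj U)"
        unfolding mat_eq_def using mmul_idm_left by blast
    qed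
    also have "\<dots> = idm i j" using Uu ij by (simp add: mat_eq_def)
    finally show "mmul ?N (mmul ?N U V) (adj (mmul ?N U V)) i j = idm i j" .
  qed
  moreover have "mmul ?N (mmul ?N (mmul ?N U V) P) (adj (mmul ?N U V)) \<in> pauli_group n" if P: "P \<in> pauli_group n" for P
  proof -
    have "mmul ?N (mmul ?N (mmul ?N U V) P) (adj (mmul ?N U V)) = mmul ?N (mmul ?N U (mmul ?N (mmul ?N V P) (adj V))) (adj U)"
      by (simp add: adj_mmul mmul_assoc)
    then show ?thesis using Uc Vc P by simp
  qed
  ultimately show ?thesis by (simp add: clifford_def)
qed

lemma pdg_apply: "x < 2^n \<Longrightarrow> \<pi> x < 2^n \<Longrightarrow> mmul (2^n) (pdg \<pi> d) W x y = d x * W (\<pi> x) y"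
proof -
  assume a: "x < 2^n" "\<pi> x < 2^n"
  have "mmul (2^n) (pdg \<pi> d) W x y = (\<Sum>m<2^n. if m = \<pi> x then d x * W m y else 0)"
    unfolding mmul_def pdg_def by (rule sum.cong) auto
  then show ?thesis using a by simp
qed

lemma stab_stateI: "U \<in> clifford n \<Longrightarrow> (\<And>x. x < 2^n \<Longrightarrow> \<phi> x = U x 0) \<Longrightarrow> stab_state n \<phi>"
  unfolding stab_state_def by blast

lemma xor_eq_0_iff: "((x::nat) XOR p = 0) = (x = p)"
proof
  assume "x XOR p = 0"
  then show "x = p" by (metis xor_xor_cancel xor.left_neutral)
qed simp

lemma stab_ket: "p < 2^n \<Longrightarrow> stab_state n (ket p)"
proof (rule stab_stateI[OF xgate_clifford])
  fix x :: nat assume "x < 2^n"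
  show "ket p x = xgate p x 0"
    by (auto simp: ket_def xgate_def pdg_def xor_eq_0_iff)
qed

lemma hgate_col0:
  "hgate n S z 0 = (if \<forall>i<n. i \<notin> S \<longrightarrow> \<not> bit z i then hh ^ card (S \<inter> {..<n}) else 0)"
proof -
  have "hgate n S z 0 = (\<Prod>i<n. if (i \<notin> S \<longrightarrow> \<not> bit z i) then (if i \<in> S then hh else 1) else 0)"
    unfolding hgate_def tensor_def by (rule prod.cong) (auto simp: had_def id2_def)
  also have "\<dots> = (if \<forall>i<n. i \<notin> S \<longrightarrow> \<not> bit z i then (\<Prod>i<n. if i \<in> S then hh else 1) else 0)"
    by (rule prod_if_zero)
  also have "(\<Prod>i<n. if i \<in> S then hh else 1) = hh ^ card (S \<inter> {..<n})"
    by (simp add: prod.If_cases Int_commute)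
  finally show ?thesis .
qed

lemma stab_pair:
  assumes p: "p < 2^n" and q: "q < 2^n" and pq: "p \<noteq> q"
  shows "stab_state n (\<lambda>x. hh * (ket p x + ket q x))"
proof -
  obtain j where bj: "bit (p XOR q) j"
    using pq by (metis bit_eqI bit_xor_iff)
  have j: "j < n" using bj xor_lt[OF p q] bit_lt_high not_less by metis
  define m where "m = (p XOR q) XOR 2^j"
  have m: "m < 2^n" unfolding m_def using j p q
    by (intro xor_lt) auto
  have bm: "bit m i = ((bit p i \<noteq> bit q i) \<and> i \<noteq> j)" for i
    unfolding m_def using bj by (auto simp: bit_xor_iff bit_exp_iff)
  have mj: "\<not> bit m j" using bm by simp
  let ?N = "2^n::nat"
  define U where "U = mmul ?N (xgate p) (mmul ?N (cgate j m) (hgate n {j}))"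
  have U: "U \<in> clifford n"
    unfolding U_def by (intro clifford_mmul xgate_clifford cgate_clifford hgate_clifford p j m mj)
  show ?thesis
  proof (rule stab_stateI[OF U])
    fix x :: nat assume x: "x < 2^n"
    have xp: "x XOR p < 2^n" using x p xor_lt by blast
    have cz: "cpi j m (x XOR p) < 2^n" using cpi_lt[OF xp m] .
    have "U x 0 = hgate n {j} (cpi j m (x XOR p)) 0"
      unfolding U_def xgate_def cgate_def
      using x xp cz by (simp add: pdg_apply)
    also have "\<dots> = (if \<forall>i<n. i \<noteq> j \<longrightarrow> \<not> bit (cpi j m (x XOR p)) i then hh else 0)"
      using j by (auto simp: hgate_col0)
    also have "(\<forall>i<n. i \<noteq> j \<longrightarrow> \<not> bit (cpi j m (x XOR p)) i) \<longleftrightarrow> (x = p \<or> x = q)"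
    proof
      assume H: "\<forall>i<n. i \<noteq> j \<longrightarrow> \<not> bit (cpi j m (x XOR p)) i"
      have H': "\<And>i. i < n \<Longrightarrow> i \<noteq> j \<Longrightarrow> (bit x i \<noteq> bit p i) = ((bit x j \<noteq> bit p j) \<and> (bit p i \<noteq> bit q i))"
        using H by (auto simp: bit_cpi[OF mj] bit_xor_iff bm)
      have pqj: "bit p j \<noteq> bit q j" using bj by (simp add: bit_xor_iff)
      show "x = p \<or> x = q"
      proof (cases "bit x j = bit p j")
        case True
        have "x = p" by (rule nat_eq_bits[OF x p]) (use H' True in auto)
        then show ?thesis by simp
      next
        case False
        have "x = q" by (rule nat_eq_bits[OF x q]) (use H' False pqj in auto)
        then show ?thesis by simp
      qed
    next
      assume "x = p \<or> x = q"
      then show "\<forall>i<n. i \<noteq> j \<longrightarrow> \<not> bit (cpi j m (x XOR p)) i"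
        using bj by (auto simp: bit_cpi[OF mj] bit_xor_iff bm)
    qed
    finally show "hh * (ket p x + ket q x) = U x 0"
      using pq by (auto simp: ket_def)
  qed
qed

lemma L_bits:
  fixes u v j l n x :: nat
  assumes u: "u < 2^n" and v: "v < 2^n" and x: "x < 2^n"
    and uj: "bit u j" and vj: "\<not> bit v j" and vl: "bit v l" and ul: "\<not> bit u l"
  defines "m1 \<equiv> u XOR 2^j" and "m2 \<equiv> v XOR 2^l"
  shows "bit (cpi j m1 (cpi l m2 x)) j = bit x j"
    and "bit (cpi j m1 (cpi l m2 x)) l = bit x l"
    and "(\<forall>i<n. i \<notin> {j, l} \<longrightarrow> \<not> bit (cpi j m1 (cpi l m2 x)) i) \<longleftrightarrow> (x = 0 \<or> x = u \<or> x = v \<or> x = u XOR v)"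
proof -
  have jl: "j \<noteq> l" using uj ul by auto
  have b1: "bit m1 i = (bit u i \<and> i \<noteq> j)" for i unfolding m1_def using uj by (auto simp: bit_xor_iff bit_exp_iff)
  have b2: "bit m2 i = (bit v i \<and> i \<noteq> l)" for i unfolding m2_def using vl by (auto simp: bit_xor_iff bit_exp_iff)
  have m1j: "\<not> bit m1 j" and m2l: "\<not> bit m2 l" using b1 b2 by auto
  have bz: "bit (cpi j m1 (cpi l m2 x)) i = ((bit x i \<noteq> (bit x l \<and> bit v i \<and> i \<noteq> l)) \<noteq> (bit x j \<and> bit u i \<and> i \<noteq> j))" for i
    using vj jl by (simp add: bit_cpi[OF m1j] bit_cpi[OF m2l] b1 b2)
  show "bit (cpi j m1 (cpi l m2 x)) j = bit x j" using bz vj by simp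
  show "bit (cpi j m1 (cpi l m2 x)) l = bit x l" using bz ul by simp
  let ?G = "\<forall>i<n. bit x i = ((bit x l \<and> bit v i) \<noteq> (bit x j \<and> bit u i))"
  have cG: "(\<forall>i<n. i \<notin> {j, l} \<longrightarrow> \<not> bit (cpi j m1 (cpi l m2 x)) i) \<longleftrightarrow> ?G"
  proof
    assume H: "\<forall>i<n. i \<notin> {j, l} \<longrightarrow> \<not> bit (cpi j m1 (cpi l m2 x)) i"
    show ?G
    proof (intro allI impI)
      fix i assume i: "i < n"
      show "bit x i = ((bit x l \<and> bit v i) \<noteq> (bit x j \<and> bit u i))"
      proof (cases "i = j \<or> i = l")
        case True then show ?thesis using uj vj vl ul jl by auto
      next
        case False then show ?thesis using H i bz[of i] by auto
      qed
    qed
  next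
    assume G: ?G
    show "\<forall>i<n. i \<notin> {j, l} \<longrightarrow> \<not> bit (cpi j m1 (cpi l m2 x)) i"
      using G bz by auto
  qed
  have xuv: "u XOR v < 2^n" using u v xor_lt by blast
  have "?G \<longleftrightarrow> (x = 0 \<or> x = u \<or> x = v \<or> x = u XOR v)"
  proof
    assume G: ?G
    consider "\<not> bit x j" "\<not> bit x l" | "bit x j" "\<not> bit x l" | "\<not> bit x j" "bit x l" | "bit x j" "bit x l"
      by blast
    then show "x = 0 \<or> x = u \<or> x = v \<or> x = u XOR v"
    proof cases
      case 1 then have "x = 0" using G by (intro nat_eq_bits[OF x, of 0]) auto
      then show ?thesis by simp
    next
      case 2 then have "x = u" using G by (intro nat_eq_bits[OF x u]) auto
      then show ?thesis by simp
    next
      case 3 then have "x = v" using G by (intro nat_eq_bits[OF x v]) auto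
      then show ?thesis by simp
    next
      case 4 then have "x = u XOR v" using G by (intro nat_eq_bits[OF x xuv]) (auto simp: bit_xor_iff)
      then show ?thesis by simp
    qed
  next
    assume "x = 0 \<or> x = u \<or> x = v \<or> x = u XOR v"
    then show ?G using uj vj vl ul by (auto simp: bit_xor_iff)
  qed
  with cG show "(\<forall>i<n. i \<notin> {j, l} \<longrightarrow> \<not> bit (cpi j m1 (cpi l m2 x)) i) \<longleftrightarrow> (x = 0 \<or> x = u \<or> x = v \<or> x = u XOR v)"
    by simp
qed

lemma hh_sq_half: "hh ^ 2 = 1/2" using hh_sq by (simp add: power2_eq_square)

lemma stab_L:
  fixes u v j l n :: nat
  assumes u: "u < 2^n" and v: "v < 2^n" and j: "j < n" and l: "l < n"
    and uj: "bit u j" and vj: "\<not> bit v j" and vl: "bit v l" and ul: "\<not> bit u l"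
  shows "stab_state n (\<lambda>x. if x = 0 \<or> x = u \<or> x = v \<or> x = u XOR v then 1/2 else 0)"
    and "stab_state n (\<lambda>x. if x = 0 then -1/2 else if x = u \<or> x = v \<or> x = u XOR v then 1/2 else 0)"
proof -
  have jl: "j \<noteq> l" using uj ul by auto
  define m1 where "m1 = u XOR 2^j"
  define m2 where "m2 = v XOR 2^l"
  have m1: "m1 < 2^n" unfolding m1_def using u j by (intro xor_lt) auto
  have m2: "m2 < 2^n" unfolding m2_def using v l by (intro xor_lt) auto
  have m1j: "\<not> bit m1 j" unfolding m1_def using uj by (auto simp: bit_xor_iff bit_exp_iff)
  have m2l: "\<not> bit m2 l" unfolding m2_def using vl by (auto simp: bit_xor_iff bit_exp_iff)
  let ?N = "2^n::nat"
  have card2: "card ({j, l} \<inter> {..<n}) = 2" using j l jl by auto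
  note LB = L_bits[OF u v _ uj vj vl ul, folded m1_def m2_def]
  define U1 where "U1 = mmul ?N (cgate l m2) (mmul ?N (cgate j m1) (hgate n {j, l}))"
  have U1: "U1 \<in> clifford n"
    unfolding U1_def by (intro clifford_mmul cgate_clifford hgate_clifford j l m1 m2 m1j m2l)
  show "stab_state n (\<lambda>x. if x = 0 \<or> x = u \<or> x = v \<or> x = u XOR v then 1/2 else 0)"
  proof (rule stab_stateI[OF U1])
    fix x :: nat assume x: "x < 2^n"
    have c1: "cpi l m2 x < 2^n" using cpi_lt[OF x m2] .
    have c2: "cpi j m1 (cpi l m2 x) < 2^n" using cpi_lt[OF c1 m1] .
    have "U1 x 0 = hgate n {j, l} (cpi j m1 (cpi l m2 x)) 0"
      unfolding U1_def cgate_def using x c1 c2 by (simp add: pdg_apply)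
    also have "\<dots> = (if x = 0 \<or> x = u \<or> x = v \<or> x = u XOR v then 1/2 else 0)"
      unfolding hgate_col0 card2 hh_sq_half using LB(3)[OF x] by simp
    finally show "(if x = 0 \<or> x = u \<or> x = v \<or> x = u XOR v then 1/2 else 0) = U1 x 0" by simp
  qed
  define U2 where "U2 = mmul ?N (cgate l m2) (mmul ?N (cgate j m1) (mmul ?N (dgate j l) (hgate n {j, l})))"
  have U2: "U2 \<in> clifford n"
    unfolding U2_def by (intro clifford_mmul cgate_clifford hgate_clifford dgate_clifford j l jl m1 m2 m1j m2l)
  show "stab_state n (\<lambda>x. if x = 0 then -1/2 else if x = u \<or> x = v \<or> x = u XOR v then 1/2 else 0)"
  proof (rule stab_stateI[OF U2])
    fix x :: nat assume x: "x < 2^n"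
    have c1: "cpi l m2 x < 2^n" using cpi_lt[OF x m2] .
    have c2: "cpi j m1 (cpi l m2 x) < 2^n" using cpi_lt[OF c1 m1] .
    have "U2 x 0 = sg (\<not> bit x j \<and> \<not> bit x l) * hgate n {j, l} (cpi j m1 (cpi l m2 x)) 0"
      unfolding U2_def cgate_def dgate_def using x c1 c2 LB(1,2)[OF x] by (simp add: pdg_apply)
    also have "\<dots> = (if x = 0 then -1/2 else if x = u \<or> x = v \<or> x = u XOR v then 1/2 else 0)"
      unfolding hgate_col0 card2 hh_sq_half using LB(3)[OF x] uj vl ul vj
      by (auto simp: sg_def bit_xor_iff)
    finally show "(if x = 0 then -1/2 else if x = u \<or> x = v \<or> x = u XOR v then 1/2 else 0) = U2 x 0" by simp
  qed
qed

lemma jnf_mult_entry: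
  assumes "i < N" "j < N"
  shows "(mat N N (\<lambda>(i,j). A i j) * mat N N (\<lambda>(i,j). B i j)) $$ (i,j) = (\<Sum>l<N. A i l * B l j)"
  using assms by (simp add: scalar_prod_def lessThan_atLeast0)

lemma unitary_left:
  assumes U: "mat_eq N (mmul N U (adj U)) idm"
  shows "mat_eq N (mmul N (adj U) U) idm"
proof -
  define A where "A = mat N N (\<lambda>(i,j). U i j)"
  define B where "B = mat N N (\<lambda>(i,j). adj U i j)"
  have AB: "A * B = 1\<^sub>m N"
  proof (rule eq_matI)
    fix i j assume "i < dim_row (1\<^sub>m N :: complex mat)" "j < dim_col (1\<^sub>m N :: complex mat)"
    then have ij: "i < N" "j < N" by auto
    have "(A * B) $$ (i,j) = mmul N U (adj U) i j"
      unfolding A_def B_def jnf_mult_entry[OF ij] mmul_def ..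
    also have "\<dots> = idm i j" using U ij by (simp add: mat_eq_def)
    finally show "(A * B) $$ (i,j) = 1\<^sub>m N $$ (i,j)" using ij by (simp add: idm_def)
  qed (auto simp: A_def B_def)
  have BA: "B * A = 1\<^sub>m N"
    by (rule mat_mult_left_right_inverse[OF _ _ AB]) (auto simp: A_def B_def)
  show ?thesis unfolding mat_eq_def
  proof (intro allI impI)
    fix i j assume ij: "i < N" "j < N"
    have "mmul N (adj U) U i j = (B * A) $$ (i,j)"
      unfolding A_def B_def jnf_mult_entry[OF ij] mmul_def ..
    then show "mmul N (adj U) U i j = idm i j" using ij BA by (simp add: idm_def)
  qed
qed

lemma stab_norm:
  assumes "stab_state n \<phi>"
  shows "(\<Sum>x<2^n. \<phi> x * cnj (\<phi> x)) = 1"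
proof -
  obtain U where U: "U \<in> clifford n" and phi: "\<forall>x<2^n. \<phi> x = U x 0"
    using assms unfolding stab_state_def by blast
  have "mat_eq (2^n) (mmul (2^n) (adj U) U) idm"
    using U unitary_left by (auto simp: clifford_def)
  then have "mmul (2^n) (adj U) U 0 0 = 1" by (simp add: mat_eq_def idm_def)
  then have "(\<Sum>x<2^n. cnj (U x 0) * U x 0) = 1" by (simp add: mmul_def adj_def)
  then show ?thesis using phi by (simp add: mult.commute)
qed

definition zb :: "nat \<Rightarrow> nat \<Rightarrow> nat \<Rightarrow> nat \<Rightarrow> complex" where
  "zb n b = tensor n (\<lambda>i. xzm False (bit b i))"

lemma zb_pg: "zb n b \<in> pauli_group n"
proof -
  have "zb n b = pxz n 1 (\<lambda>_. False) (\<lambda>i. bit b i)" by (simp add: zb_def pxz_def smat_1)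
  then show ?thesis using pxz_pg[OF phases_1] by simp
qed

lemma zb_sum:
  assumes "m < 2^n" "l < 2^n"
  shows "(\<Sum>b<2^n. zb n b m l) = (if m = 0 \<and> l = 0 then 2^n else 0)"
proof -
  have "(\<Sum>b::nat<2^n. zb n b m l) = (\<Prod>i<n. xzm False False (bit m i) (bit l i) + xzm False True (bit m i) (bit l i))"
    unfolding zb_def tensor_def by (rule sum_bits_prod)
  also have "\<dots> = (\<Prod>i<n. if \<not> bit m i \<and> \<not> bit l i then 2 else 0)"
    by (rule prod.cong) (auto simp: xzm_def sg_def)
  also have "\<dots> = (if \<forall>i<n. \<not> bit m i \<and> \<not> bit l i then 2^n else 0)"
    by (simp add: prod_if_zero)
  also have "(\<forall>i<n. \<not> bit m i \<and> \<not> bit l i) \<longleftrightarrow> m = 0 \<and> l = 0"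
    using nat_eq_bits[OF assms(1), of 0] nat_eq_bits[OF assms(2), of 0] by auto
  finally show ?thesis .
qed

lemma zb_col0: "l < 2^n \<Longrightarrow> zb n b l 0 = (if l = 0 then 1 else 0)"
proof -
  assume l: "l < 2^n"
  have "zb n b l 0 = (\<Prod>i<n. if \<not> bit l i then 1 else 0)"
    unfolding zb_def tensor_def by (rule prod.cong) (auto simp: xzm_def sg_def)
  also have "\<dots> = (if \<forall>i<n. \<not> bit l i then 1 else 0)" by (simp add: prod_if_zero)
  finally show ?thesis using nat_eq_bits[OF l, of 0] by auto
qed

lemma proj_as_sum:
  assumes x: "x < 2^n" and y: "y < 2^n"
  shows "(\<Sum>b<2^n. mmul (2^n) (mmul (2^n) U (zb n b)) (adj U) x y) = 2^n * (U x 0 * cnj (U y 0))"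
proof -
  let ?N = "2^n::nat"
  have "(\<Sum>b<?N. mmul ?N (mmul ?N U (zb n b)) (adj U) x y)
      = (\<Sum>b<?N. \<Sum>l<?N. \<Sum>m<?N. U x m * zb n b m l * cnj (U y l))"
    by (simp add: mmul_def adj_def sum_distrib_right)
  also have "\<dots> = (\<Sum>l<?N. \<Sum>b<?N. \<Sum>m<?N. U x m * zb n b m l * cnj (U y l))"
    by (rule sum.swap)
  also have "\<dots> = (\<Sum>l<?N. \<Sum>m<?N. \<Sum>b<?N. U x m * zb n b m l * cnj (U y l))"
    by (rule sum.cong[OF refl], rule sum.swap)
  also have "\<dots> = (\<Sum>l<?N. \<Sum>m<?N. U x m * (\<Sum>b<?N. zb n b m l) * cnj (U y l))"
    by (simp add: sum_distrib_left sum_distrib_right)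
  also have "\<dots> = (\<Sum>l<?N. \<Sum>m<?N. if m = 0 \<and> l = 0 then U x 0 * 2^n * cnj (U y 0) else 0)"
    by (intro sum.cong refl) (simp add: zb_sum)
  also have "\<dots> = (\<Sum>l<?N. if l = 0 then (\<Sum>m<?N. if m = 0 then U x 0 * 2^n * cnj (U y 0) else 0) else 0)"
    by (rule sum.cong) auto
  also have "\<dots> = 2^n * (U x 0 * cnj (U y 0))"
    by simp
  finally show ?thesis .
qed

lemma tensor_xzm_if: "tensor n (\<lambda>i. xzm (A i) (B i)) x y = (if \<forall>i<n. bit y i = (bit x i \<noteq> A i) then \<Prod>i<n. sg (B i \<and> bit y i) else 0)"
  unfolding tensor_def xzm_if by (rule prod_if_zero)

lemma cmod_prod_sg: "cmod (\<Prod>i<(n::nat). sg (P i)) = 1"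
  using prod_sg_pm1[of P n] by auto

lemma phases_cmod: "c \<in> phases \<Longrightarrow> cmod c = 1"
  by (auto simp: phases_def)

lemma stab_shift:
  assumes st: "stab_state n \<phi>" and a: "a < 2^n" and b: "b < 2^n" and ab: "\<phi> a * cnj (\<phi> b) \<noteq> 0"
    and x: "x < 2^n"
  shows "cmod (\<phi> x) = cmod (\<phi> (x XOR (a XOR b)))"
proof -
  let ?N = "2^n::nat"
  obtain U where U: "U \<in> clifford n" and phi: "\<forall>x<2^n. \<phi> x = U x 0"
    using st unfolding stab_state_def by blast
  have Uu: "mat_eq ?N (mmul ?N U (adj U)) idm" using U by (simp add: clifford_def)
  have Uc: "\<And>P. P \<in> pauli_group n \<Longrightarrow> mmul ?N (mmul ?N U P) (adj U) \<in> pauli_group n"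
    using U by (simp add: clifford_def)
  have "(\<Sum>b'<?N. mmul ?N (mmul ?N U (zb n b')) (adj U) a b) \<noteq> 0"
    using proj_as_sum[OF a b, of U] ab phi a b by simp
  then obtain b0 where "mmul ?N (mmul ?N U (zb n b0)) (adj U) a b \<noteq> 0"
    by (meson sum.neutral)
  define Q where "Q = mmul ?N (mmul ?N U (zb n b0)) (adj U)"
  have Qab: "Q a b \<noteq> 0" using \<open>mmul ?N (mmul ?N U (zb n b0)) (adj U) a b \<noteq> 0\<close> by (simp add: Q_def)
  have "Q \<in> pauli_group n" unfolding Q_def by (rule Uc[OF zb_pg])
  then obtain c A B where c: "c \<in> phases" and QP: "mat_eq ?N Q (pxz n c A B)"
    unfolding pg_iff by blast
  let ?T = "tensor n (\<lambda>i. xzm (A i) (B i))"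
  have "?T a b \<noteq> 0" using Qab QP a b by (auto simp: mat_eq_def pxz_def smat_def)
  then have Ab: "\<forall>i<n. bit b i = (bit a i \<noteq> A i)"
    unfolding tensor_xzm_if by (auto split: if_splits)
  define d where "d = a XOR b"
  have d: "d < 2^n" unfolding d_def using a b xor_lt by blast
  have bd: "\<And>i. i < n \<Longrightarrow> bit d i = A i" using Ab by (auto simp: d_def bit_xor_iff)
  have xd: "x XOR d < 2^n" using x d xor_lt by blast
  have "(\<Sum>y<?N. Q x y * \<phi> y) = mmul ?N Q U x 0"
    using phi by (simp add: mmul_def)
  also have "mmul ?N Q U = mmul ?N (mmul ?N U (zb n b0)) (mmul ?N (adj U) U)"
    unfolding Q_def by (simp add: mmul_assoc)
  also have "\<dots> x 0 = mmul ?N (mmul ?N U (zb n b0)) idm x 0"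
    using unitary_left[OF Uu] x by (intro mmul_cong_right) auto
  also have "\<dots> = mmul ?N U (zb n b0) x 0" by (simp add: mmul_idm_right)
  also have "\<dots> = (\<Sum>l<?N. if l = 0 then U x l else 0)"
    unfolding mmul_def by (rule sum.cong) (auto simp: zb_col0)
  also have "\<dots> = \<phi> x" using phi x by simp
  finally have Qphi: "(\<Sum>y<?N. Q x y * \<phi> y) = \<phi> x" .
  have "(\<Sum>y<?N. Q x y * \<phi> y) = (\<Sum>y<?N. if y = x XOR d then c * ?T x y * \<phi> y else 0)"
  proof (rule sum.cong)
    fix y assume "y \<in> {..<?N}"
    then have y: "y < ?N" by simp
    have "y \<noteq> x XOR d \<Longrightarrow> ?T x y = 0"
    proof -
      assume ne: "y \<noteq> x XOR d"
      have "\<not> (\<forall>i<n. bit y i = (bit x i \<noteq> A i))"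
        using ne nat_eq_bits[OF y xd] bd by (auto simp: bit_xor_iff)
      then show "?T x y = 0" unfolding tensor_xzm_if by (rule if_not_P)
    qed
    then show "Q x y * \<phi> y = (if y = x XOR d then c * ?T x y * \<phi> y else 0)"
      using QP x y by (auto simp: mat_eq_def pxz_def smat_def)
  qed simp
  also have "\<dots> = c * ?T x (x XOR d) * \<phi> (x XOR d)" using xd by simp
  finally have eq: "\<phi> x = c * ?T x (x XOR d) * \<phi> (x XOR d)" using Qphi by simp
  have "?T x (x XOR d) = (\<Prod>i<n. sg (B i \<and> bit (x XOR d) i))"
    unfolding tensor_xzm_if using bd by (auto simp: bit_xor_iff)
  then have "cmod (c * ?T x (x XOR d)) = 1"
    using phases_cmod[OF c] by (simp add: norm_mult cmod_prod_sg)
  then show ?thesis using eq d_def by (simp add: norm_mult)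
qed

definition Kt :: "nat \<Rightarrow> real \<Rightarrow> nat \<Rightarrow> nat \<Rightarrow> nat \<Rightarrow> complex" where
  "Kt n g t = tensor n (\<lambda>i. ad_kraus g (bit t i))"

definition kv :: "nat \<Rightarrow> real \<Rightarrow> (nat \<Rightarrow> complex) \<Rightarrow> nat \<Rightarrow> nat \<Rightarrow> complex" where
  "kv n g \<psi> t x = (\<Sum>l<2^n. Kt n g t x l * \<psi> l)"

lemma chan_eq: "ad_channel n g (proj \<psi>) x y = (\<Sum>t<2^n. kv n g \<psi> t x * cnj (kv n g \<psi> t y))"
proof -
  have "mmul (2^n) (mmul (2^n) (Kt n g t) (proj \<psi>)) (adj (Kt n g t)) x y = kv n g \<psi> t x * cnj (kv n g \<psi> t y)" for t
  proof -
    have "mmul (2^n) (mmul (2^n) (Kt n g t) (proj \<psi>)) (adj (Kt n g t)) x y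
        = (\<Sum>m<2^n. (\<Sum>l<2^n. Kt n g t x l * \<psi> l) * cnj (\<psi> m) * cnj (Kt n g t y m))"
      unfolding mmul_def proj_def adj_def by (rule sum.cong) (simp_all add: sum_distrib_right sum_distrib_left mult_ac)
    also have "\<dots> = kv n g \<psi> t x * cnj (kv n g \<psi> t y)"
      by (simp add: kv_def sum_distrib_left mult_ac)
    finally show ?thesis .
  qed
  then show ?thesis by (simp add: ad_channel_def Kt_def Let_def)
qed

lemma prod_if2:
  "(\<Prod>i<(n::nat). if P i then (a::'a::comm_monoid_mult) else if Q i then c else 1)
     = a ^ card {i. i < n \<and> P i} * c ^ card {i. i < n \<and> Q i \<and> \<not> P i}"
proof -
  have "(\<Prod>i<n. if P i then a else if Q i then c else 1)
      = (\<Prod>i\<in>{..<n} \<inter> {i. P i}. a) * (\<Prod>i\<in>{..<n} \<inter> - {i. P i}. if Q i then c else 1)"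
    by (rule prod.If_cases) simp
  also have "(\<Prod>i\<in>{..<n} \<inter> - {i. P i}. if Q i then c else 1)
      = (\<Prod>i\<in>({..<n} \<inter> - {i. P i}) \<inter> {i. Q i}. c) * (\<Prod>i\<in>({..<n} \<inter> - {i. P i}) \<inter> - {i. Q i}. 1)"
    by (rule prod.If_cases) simp
  also have "({..<n} \<inter> {i. P i}) = {i. i < n \<and> P i}" by auto
  also have "({..<n} \<inter> - {i. P i}) \<inter> {i. Q i} = {i. i < n \<and> Q i \<and> \<not> P i}" by auto
  finally show ?thesis by simp
qed

lemma Kt_formula:
  assumes x: "x < 2^n" and b: "b < 2^n" and t: "t < 2^n"
  shows "Kt n g t x b = (if (\<forall>i<n. bit t i \<longrightarrow> bit b i) \<and> x = b XOR t
      then complex_of_real (sqrt g ^ card {i. i < n \<and> bit t i} * sqrt (1 - g) ^ card {i. i < n \<and> bit b i \<and> \<not> bit t i}) else 0)"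
proof -
  let ?C = "\<lambda>i. if bit t i then (\<not> bit x i \<and> bit b i) else bit x i = bit b i"
  have "Kt n g t x b = (\<Prod>i<n. if ?C i then complex_of_real (if bit t i then sqrt g else if bit b i then sqrt (1 - g) else 1) else 0)"
    unfolding Kt_def tensor_def by (rule prod.cong) (auto simp: ad_kraus_def)
  also have "\<dots> = (if \<forall>i<n. ?C i then (\<Prod>i<n. complex_of_real (if bit t i then sqrt g else if bit b i then sqrt (1 - g) else 1)) else 0)"
    by (rule prod_if_zero)
  also have "(\<forall>i<n. ?C i) \<longleftrightarrow> (\<forall>i<n. bit t i \<longrightarrow> bit b i) \<and> x = b XOR t"
  proof
    assume C: "\<forall>i<n. ?C i"
    have "x = b XOR t"
      by (rule nat_eq_bits[OF x xor_lt[OF b t]]) (use C in \<open>auto simp: bit_xor_iff split: if_splits\<close>)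
    then show "(\<forall>i<n. bit t i \<longrightarrow> bit b i) \<and> x = b XOR t" using C by (auto split: if_splits)
  next
    assume "(\<forall>i<n. bit t i \<longrightarrow> bit b i) \<and> x = b XOR t"
    then show "\<forall>i<n. ?C i" by (auto simp: bit_xor_iff)
  qed
  also have "(\<Prod>i<n. complex_of_real (if bit t i then sqrt g else if bit b i then sqrt (1 - g) else 1))
      = complex_of_real (\<Prod>i<n. if bit t i then sqrt g else if bit b i then sqrt (1 - g) else 1)"
    by simp
  also have "(\<Prod>i<n. if bit t i then sqrt g else if bit b i then sqrt (1 - g) else 1)
      = sqrt g ^ card {i. i < n \<and> bit t i} * sqrt (1 - g) ^ card {i. i < n \<and> bit b i \<and> \<not> bit t i}"
    by (rule prod_if2)
  finally show ?thesis .
qed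

lemma sum_ket: "a < N \<Longrightarrow> (\<Sum>l<N. f l * ket a l) = f a"
proof -
  assume a: "a < N"
  have "(\<Sum>l<N. f l * ket a l) = (\<Sum>l<N. if l = a then f a else 0)"
    by (rule sum.cong) (auto simp: ket_def)
  then show ?thesis using a by simp
qed

lemma kv_expand:
  assumes u: "u < 2^n" and v: "v < 2^n"
  shows "kv n g (psi_L u v a b) t x = complex_of_real a * Kt n g t x 0
     + complex_of_real b * complex_of_real (1 / sqrt 3) * (Kt n g t x u + Kt n g t x v + Kt n g t x (u XOR v))"
proof -
  have w: "u XOR v < 2^n" using xor_lt[OF u v] .
  let ?c = "complex_of_real b * complex_of_real (1 / sqrt 3)"
  have "kv n g (psi_L u v a b) t x = (\<Sum>l<2^n. complex_of_real a * (Kt n g t x l * ket 0 l)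
      + ?c * (Kt n g t x l * ket u l) + ?c * (Kt n g t x l * ket v l) + ?c * (Kt n g t x l * ket (u XOR v) l))"
    unfolding kv_def psi_L_def D_L_def by (rule sum.cong) (simp_all add: algebra_simps)
  also have "\<dots> = complex_of_real a * (\<Sum>l<2^n. Kt n g t x l * ket 0 l)
      + ?c * (\<Sum>l<2^n. Kt n g t x l * ket u l) + ?c * (\<Sum>l<2^n. Kt n g t x l * ket v l)
      + ?c * (\<Sum>l<2^n. Kt n g t x l * ket (u XOR v) l)"
    by (simp add: sum.distrib sum_distrib_left)
  also have "\<dots> = complex_of_real a * Kt n g t x 0 + ?c * (Kt n g t x u + Kt n g t x v + Kt n g t x (u XOR v))"
  proof -
    have z: "0 < (2::nat)^n" by simp
    show ?thesis by (simp only: sum_ket[OF z] sum_ket[OF u] sum_ket[OF v] sum_ket[OF w] distrib_left add.assoc)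
  qed
  finally show ?thesis .
qed

definition cterm :: "nat \<Rightarrow> nat set \<Rightarrow> (nat \<Rightarrow> nat \<Rightarrow> complex) \<Rightarrow> bool" where
  "cterm n W P \<longleftrightarrow> (\<exists>w \<phi>. w \<ge> 0 \<and> stab_state n \<phi> \<and> (\<forall>x<2^n. \<phi> x \<noteq> 0 \<longrightarrow> x \<in> W)
      \<and> mat_eq (2^n) P (\<lambda>x y. complex_of_real w * proj \<phi> x y))"

lemma cone_empty: "stab_cone_on n W (\<lambda>x y. 0)"
  unfolding stab_cone_on_def by (rule exI[of _ 0]) (simp add: mat_eq_def)

lemma cone_add_term:
  assumes A: "stab_cone_on n W A" and P: "mat_eq (2^n) P (\<lambda>x y. 0) \<or> cterm n W P"
  shows "stab_cone_on n W (\<lambda>x y. A x y + P x y)"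
proof -
  obtain m :: nat and w \<phi> where H: "\<forall>j<m. w j \<ge> 0 \<and> stab_state n (\<phi> j) \<and> (\<forall>x<2^n. \<phi> j x \<noteq> 0 \<longrightarrow> x \<in> W)"
    and E: "mat_eq (2^n) A (\<lambda>x y. \<Sum>j<m. complex_of_real (w j) * proj (\<phi> j) x y)"
    using A unfolding stab_cone_on_def by (elim exE conjE) blast
  show ?thesis
  proof (cases "mat_eq (2^n) P (\<lambda>x y. 0)")
    case True
    then show ?thesis unfolding stab_cone_on_def using H E
      by (intro exI[of _ m] exI[of _ w] exI[of _ \<phi>]) (auto simp: mat_eq_def)
  next
    case False
    with P obtain wt \<psi> where wt: "wt \<ge> 0" and st: "stab_state n \<psi>" and sp: "\<forall>x<2^n. \<psi> x \<noteq> 0 \<longrightarrow> x \<in> W"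
      and PE: "mat_eq (2^n) P (\<lambda>x y. complex_of_real wt * proj \<psi> x y)"
      unfolding cterm_def by blast
    let ?w = "w(m := wt)" and ?\<phi> = "\<phi>(m := \<psi>)"
    have F1: "\<forall>j<Suc m. ?w j \<ge> 0 \<and> stab_state n (?\<phi> j) \<and> (\<forall>x<2^n. ?\<phi> j x \<noteq> 0 \<longrightarrow> x \<in> W)"
      using H wt st sp by (auto simp: less_Suc_eq)
    have F2: "mat_eq (2^n) (\<lambda>x y. A x y + P x y) (\<lambda>x y. \<Sum>j<Suc m. complex_of_real (?w j) * proj (?\<phi> j) x y)"
      unfolding mat_eq_def
    proof (intro allI impI)
      fix x y :: nat assume xy: "x < 2^n" "y < 2^n"
      have "(\<Sum>j<m. complex_of_real (?w j) * proj (?\<phi> j) x y) = (\<Sum>j<m. complex_of_real (w j) * proj (\<phi> j) x y)"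
        by (rule sum.cong) auto
      then show "A x y + P x y = (\<Sum>j<Suc m. complex_of_real (?w j) * proj (?\<phi> j) x y)"
        using E PE xy by (simp add: mat_eq_def)
    qed
    show ?thesis unfolding stab_cone_on_def
      by (rule exI[of _ "Suc m"], rule exI[of _ ?w], rule exI[of _ ?\<phi>], rule conjI[OF F1 F2])
  qed
qed

lemma cone_sum:
  assumes "finite T" and "\<And>t. t \<in> T \<Longrightarrow> mat_eq (2^n) (P t) (\<lambda>x y. 0) \<or> cterm n W (P t)"
  shows "stab_cone_on n W (\<lambda>x y. \<Sum>t\<in>T. P t x y)"
  using assms
proof (induction T rule: finite_induct)
  case empty then show ?case by (simp add: cone_empty)
next
  case (insert t T)
  have "stab_cone_on n W (\<lambda>x y. (\<Sum>t\<in>T. P t x y) + P t x y)"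
    using insert by (intro cone_add_term) auto
  then show ?case using insert by (simp add: add.commute)
qed

lemma cone_mono: "stab_cone_on n W A \<Longrightarrow> W \<subseteq> W' \<Longrightarrow> stab_cone_on n W' A"
  unfolding stab_cone_on_def by (elim exE conjE) blast

lemma cone_outside:
  assumes "stab_cone_on n W A" "x < 2^n" "y < 2^n" "x \<notin> W \<or> y \<notin> W"
  shows "A x y = 0"
proof -
  obtain m :: nat and w \<phi> where H: "\<forall>j<m. w j \<ge> 0 \<and> stab_state n (\<phi> j) \<and> (\<forall>x<2^n. \<phi> j x \<noteq> 0 \<longrightarrow> x \<in> W)"
    and E: "mat_eq (2^n) A (\<lambda>x y. \<Sum>j<m. complex_of_real (w j) * proj (\<phi> j) x y)"
    using assms(1) unfolding stab_cone_on_def by (elim exE conjE) blast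
  have "A x y = (\<Sum>j<m. complex_of_real (w j) * proj (\<phi> j) x y)" using E assms by (simp add: mat_eq_def)
  also have "\<dots> = 0" using H assms by (intro sum.neutral) (auto simp: proj_def)
  finally show ?thesis .
qed

lemma cone_polytope:
  assumes C: "stab_cone_on n UNIV \<rho>" and tr: "(\<Sum>x<2^n. \<rho> x x) = 1"
  shows "\<rho> \<in> stab_polytope n"
proof -
  obtain m :: nat and w \<phi> where H: "\<forall>j<m. w j \<ge> 0 \<and> stab_state n (\<phi> j)"
    and E: "mat_eq (2^n) \<rho> (\<lambda>x y. \<Sum>j<m. complex_of_real (w j) * proj (\<phi> j) x y)"
    using C unfolding stab_cone_on_def by (elim exE conjE) blast
  have "(\<Sum>x<2^n. \<rho> x x) = (\<Sum>x<2^n. \<Sum>j<m. complex_of_real (w j) * proj (\<phi> j) x x)"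
    using E by (intro sum.cong) (auto simp: mat_eq_def)
  also have "\<dots> = (\<Sum>j<m. complex_of_real (w j) * (\<Sum>x<2^n. \<phi> j x * cnj (\<phi> j x)))"
    by (subst sum.swap) (simp add: proj_def sum_distrib_left)
  also have "\<dots> = (\<Sum>j<m. complex_of_real (w j))"
    using H stab_norm by (intro sum.cong) auto
  finally have "complex_of_real (\<Sum>j<m. w j) = 1" using tr by simp
  then have "(\<Sum>j<m. w j) = 1" by (metis of_real_1 of_real_eq_iff)
  then show ?thesis unfolding stab_polytope_def using H E by blast
qed

lemma polytope_bound:
  assumes P: "\<rho> \<in> stab_polytope n" and u: "u < 2^n" and v: "v < 2^n"
    and ent: "\<And>a b. a \<in> {u, v, u XOR v} \<Longrightarrow> b \<in> {u, v, u XOR v} \<Longrightarrow> \<rho> a b = complex_of_real s"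
  shows "s \<le> Re (\<rho> 0 0)" and "cmod (\<rho> 0 u) \<le> s"
proof -
  let ?N = "2^n::nat"
  define w where "w = u XOR v"
  have wl: "w < ?N" unfolding w_def using xor_lt[OF u v] .
  obtain m :: nat and wt \<phi> where H: "\<forall>j<m. wt j \<ge> 0 \<and> stab_state n (\<phi> j)"
    and E: "mat_eq ?N \<rho> (\<lambda>x y. \<Sum>j<m. complex_of_real (wt j) * proj (\<phi> j) x y)"
    using P unfolding stab_polytope_def by blast
  have rho: "\<And>x y. x < ?N \<Longrightarrow> y < ?N \<Longrightarrow> \<rho> x y = (\<Sum>j<m. complex_of_real (wt j) * (\<phi> j x * cnj (\<phi> j y)))"
    using E by (simp add: mat_eq_def proj_def)
  have same: "\<And>j. j < m \<Longrightarrow> wt j \<noteq> 0 \<Longrightarrow> \<phi> j a = \<phi> j b" if ab: "a \<in> {u, v, w}" "b \<in> {u, v, w}" for a b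
  proof -
    have a: "a < ?N" and b: "b < ?N" using ab u v wl by auto
    have "(\<Sum>j<m. complex_of_real (wt j * (cmod (\<phi> j a - \<phi> j b))\<^sup>2))
        = (\<Sum>j<m. complex_of_real (wt j) * ((\<phi> j a - \<phi> j b) * cnj (\<phi> j a - \<phi> j b)))"
      by (simp only: of_real_mult complex_norm_square)
    also have "\<dots> = \<rho> a a - \<rho> a b - \<rho> b a + \<rho> b b"
      using a b by (simp add: rho algebra_simps sum.distrib sum_subtractf)
    also have "\<dots> = 0" using ent ab by (simp add: w_def)
    finally have "complex_of_real (\<Sum>j<m. wt j * (cmod (\<phi> j a - \<phi> j b))\<^sup>2) = 0"
      unfolding of_real_sum .
    then have "(\<Sum>j<m. wt j * (cmod (\<phi> j a - \<phi> j b))\<^sup>2) = 0"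
      by (simp only: of_real_eq_0_iff)
    then have "\<forall>j\<in>{..<m}. wt j * (cmod (\<phi> j a - \<phi> j b))\<^sup>2 = 0"
      using H by (subst sum_nonneg_eq_0_iff[symmetric]) auto
    then show "\<And>j. j < m \<Longrightarrow> wt j \<noteq> 0 \<Longrightarrow> \<phi> j a = \<phi> j b" by auto
  qed
  have key: "cmod (\<phi> j 0) = cmod (\<phi> j u) \<or> \<phi> j u = 0" if j: "j < m" "wt j \<noteq> 0" for j
  proof (cases "\<phi> j u = 0")
    case False
    have uv: "\<phi> j u = \<phi> j v" and uw: "\<phi> j u = \<phi> j w" using same[of u v] same[of u w] j by auto
    have "\<phi> j u * cnj (\<phi> j v) \<noteq> 0" using False uv by simp
    then have "cmod (\<phi> j 0) = cmod (\<phi> j (0 XOR (u XOR v)))"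
      using stab_shift[of n "\<phi> j" u v 0] H j u v by simp
    then show ?thesis using uw by (simp add: w_def)
  qed simp
  have tm1: "wt j * (cmod (\<phi> j u))\<^sup>2 \<le> wt j * (cmod (\<phi> j 0))\<^sup>2"
    and tm2: "wt j * (cmod (\<phi> j 0) * cmod (\<phi> j u)) = wt j * (cmod (\<phi> j u))\<^sup>2" if j: "j < m" for j
  proof -
    show "wt j * (cmod (\<phi> j u))\<^sup>2 \<le> wt j * (cmod (\<phi> j 0))\<^sup>2"
      using key[OF j] H j by (cases "wt j = 0") auto
    show "wt j * (cmod (\<phi> j 0) * cmod (\<phi> j u)) = wt j * (cmod (\<phi> j u))\<^sup>2"
      using key[OF j] by (cases "wt j = 0") (auto simp: power2_eq_square)
  qed
  have Rdiag: "\<And>x. x < ?N \<Longrightarrow> Re (\<rho> x x) = (\<Sum>j<m. wt j * (cmod (\<phi> j x))\<^sup>2)"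
  proof -
    fix x assume x: "x < ?N"
    have "\<rho> x x = (\<Sum>j<m. complex_of_real (wt j * (cmod (\<phi> j x))\<^sup>2))"
      using rho[OF x x] by (simp only: of_real_mult complex_norm_square)
    then show "Re (\<rho> x x) = (\<Sum>j<m. wt j * (cmod (\<phi> j x))\<^sup>2)"
      by (simp flip: of_real_sum)
  qed
  have suu: "Re (\<rho> u u) = s" using ent by simp
  show "s \<le> Re (\<rho> 0 0)"
  proof -
    have "(\<Sum>j<m. wt j * (cmod (\<phi> j u))\<^sup>2) \<le> (\<Sum>j<m. wt j * (cmod (\<phi> j 0))\<^sup>2)"
      by (rule sum_mono) (simp add: tm1)
    then show ?thesis using Rdiag[OF u] Rdiag[of 0] suu by simp
  qed
  have "cmod (\<rho> 0 u) = cmod (\<Sum>j<m. complex_of_real (wt j) * (\<phi> j 0 * cnj (\<phi> j u)))"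
    using rho[of 0 u] u by simp
  also have "\<dots> \<le> (\<Sum>j<m. cmod (complex_of_real (wt j) * (\<phi> j 0 * cnj (\<phi> j u))))"
    by (rule norm_sum)
  also have "\<dots> = (\<Sum>j<m. wt j * (cmod (\<phi> j 0) * cmod (\<phi> j u)))"
    using H by (intro sum.cong) (auto simp: norm_mult)
  also have "\<dots> = (\<Sum>j<m. wt j * (cmod (\<phi> j u))\<^sup>2)"
    using tm2 by (intro sum.cong) auto
  also have "\<dots> = s" using Rdiag[OF u] suu by simp
  finally show "cmod (\<rho> 0 u) \<le> s" .
qed

definition sub :: "nat \<Rightarrow> nat \<Rightarrow> nat \<Rightarrow> bool" where
  "sub n t b \<longleftrightarrow> (\<forall>i<n. bit t i \<longrightarrow> bit b i)"

lemma hw_zero_iff: "x < 2^n \<Longrightarrow> hw n x = 0 \<longleftrightarrow> x = 0"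
proof
  assume x: "x < 2^n" and h: "hw n x = 0"
  then have "{i. i < n \<and> bit x i} = {}" unfolding hw_def by simp
  then show "x = 0" using nat_eq_bits[OF x, of 0] by auto
qed (simp add: hw_def)

lemma sub_card:
  assumes "sub n t b"
  shows "card {i. i < n \<and> bit b i \<and> \<not> bit t i} = hw n b - hw n t" and "hw n t \<le> hw n b"
proof -
  have sub: "{i. i < n \<and> bit t i} \<subseteq> {i. i < n \<and> bit b i}" using assms by (auto simp: sub_def)
  have eq: "{i. i < n \<and> bit b i \<and> \<not> bit t i} = {i. i < n \<and> bit b i} - {i. i < n \<and> bit t i}" by auto
  show "card {i. i < n \<and> bit b i \<and> \<not> bit t i} = hw n b - hw n t"
    unfolding eq hw_def by (rule card_Diff_subset) (use sub in auto)
  show "hw n t \<le> hw n b" unfolding hw_def by (rule card_mono) (use sub in auto)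
qed

lemma sub_eq:
  assumes t: "t < 2^n" and b: "b < 2^n" and s: "sub n t b" and h: "hw n t = hw n b"
  shows "t = b"
proof -
  have sub: "{i. i < n \<and> bit t i} \<subseteq> {i. i < n \<and> bit b i}" using s by (auto simp: sub_def)
  have "{i. i < n \<and> bit t i} = {i. i < n \<and> bit b i}"
    by (rule card_subset_eq) (use sub h in \<open>auto simp: hw_def\<close>)
  then show ?thesis using nat_eq_bits[OF t b] by blast
qed

lemma hw_xor_sub: "sub n t b \<Longrightarrow> hw n (b XOR t) = hw n b - hw n t"
proof -
  assume s: "sub n t b"
  have "{i. i < n \<and> bit (b XOR t) i} = {i. i < n \<and> bit b i \<and> \<not> bit t i}"
    using s by (auto simp: bit_xor_iff sub_def)
  then show ?thesis using sub_card[OF s] by (simp add: hw_def)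
qed

lemma Kt_sub:
  assumes x: "x < 2^n" and b: "b < 2^n" and t: "t < 2^n" and hb: "hw n b = k"
  shows "Kt n g t x b = (if sub n t b then complex_of_real (sqrt g ^ hw n t * sqrt (1 - g) ^ (k - hw n t)) * ket (b XOR t) x else 0)"
proof (cases "sub n t b")
  case True
  have c1: "card {i. i < n \<and> bit t i} = hw n t" by (simp add: hw_def)
  have c2: "card {i. i < n \<and> bit b i \<and> \<not> bit t i} = k - hw n t" using sub_card(1)[OF True] hb by simp
  show ?thesis using Kt_formula[OF x b t, of g] True unfolding c1 c2 sub_def by (auto simp: ket_def)
next
  case False
  then have "\<not> (\<forall>i<n. bit t i \<longrightarrow> bit b i)" by (simp add: sub_def)
  then have "Kt n g t x b = 0" using Kt_formula[OF x b t, of g] by (simp only: if_not_P de_Morgan_conj) simp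
  then show ?thesis using False by simp
qed

lemma Kt_zero:
  assumes x: "x < 2^n" and t: "t < 2^n"
  shows "Kt n g t x 0 = (if t = 0 \<and> x = 0 then 1 else 0)"
proof -
  have "(\<forall>i<n. bit t i \<longrightarrow> bit 0 i) \<longleftrightarrow> t = 0"
    using nat_eq_bits[OF t, of 0] by auto
  then show ?thesis using Kt_formula[OF x _ t, of 0 g] by (auto simp: hw_def)
qed

lemma cterm_single:
  assumes p: "p < 2^n" and pW: "p \<in> W" and eq: "\<And>x. x < 2^n \<Longrightarrow> \<phi> x = complex_of_real r * ket p x"
  shows "cterm n W (proj \<phi>)"
  unfolding cterm_def
proof (intro exI conjI)
  show "0 \<le> r^2" by simp
  show "stab_state n (ket p)" using stab_ket[OF p] .
  show "\<forall>x<2^n. ket p x \<noteq> 0 \<longrightarrow> x \<in> W" using pW by (simp add: ket_def)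
  show "mat_eq (2^n) (proj \<phi>) (\<lambda>x y. complex_of_real (r^2) * proj (ket p) x y)"
    using eq by (simp add: mat_eq_def proj_def ket_def power2_eq_square)
qed

lemma cterm_pair:
  assumes p: "p < 2^n" and q: "q < 2^n" and pq: "p \<noteq> q" and pW: "p \<in> W" and qW: "q \<in> W"
    and eq: "\<And>x. x < 2^n \<Longrightarrow> \<phi> x = complex_of_real r * (ket p x + ket q x)"
  shows "cterm n W (proj \<phi>)"
  unfolding cterm_def
proof (intro exI conjI)
  show "0 \<le> 2 * r^2" by simp
  show "stab_state n (\<lambda>x. hh * (ket p x + ket q x))" using stab_pair[OF p q pq] .
  show "\<forall>x<2^n. hh * (ket p x + ket q x) \<noteq> 0 \<longrightarrow> x \<in> W" using pW qW by (simp add: ket_def)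
  have c: "cnj (ket a y) = ket a y" for a y :: nat by (simp add: ket_def)
  show "mat_eq (2^n) (proj \<phi>) (\<lambda>x y. complex_of_real (2 * r^2) * proj (\<lambda>x. hh * (ket p x + ket q x)) x y)"
    unfolding mat_eq_def proj_def
  proof (intro allI impI)
    fix x y :: nat assume xy: "x < 2^n" "y < 2^n"
    have "\<phi> x * cnj (\<phi> y) = complex_of_real r * complex_of_real r * ((ket p x + ket q x) * (ket p y + ket q y))"
      using eq xy by (simp add: c mult_ac)
    also have "\<dots> = complex_of_real (2 * r^2) * (hh * hh) * ((ket p x + ket q x) * (ket p y + ket q y))"
      by (simp add: hh_sq power2_eq_square)
    also have "\<dots> = complex_of_real (2 * r^2) * (hh * (ket p x + ket q x) * cnj (hh * (ket p y + ket q y)))"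
      by (simp add: c mult_ac)
    finally show "\<phi> x * cnj (\<phi> y) = complex_of_real (2 * r^2) * (hh * (ket p x + ket q x) * cnj (hh * (ket p y + ket q y)))" .
  qed
qed

lemma cone_mat_eq: "stab_cone_on n W A \<Longrightarrow> mat_eq (2^n) B A \<Longrightarrow> stab_cone_on n W B"
  unfolding stab_cone_on_def by (meson mat_eq_trans)

lemma main_alg:
  fixes E0x E0y Sx Sy r3 sq sgk a b :: complex
  assumes "r3 * r3 = 1/3"
  shows "(a*E0x + b*r3*sq*Sx) * (a*E0y + b*r3*sq*Sy) + (b*r3*sgk*E0x) * (b*r3*sgk*E0y)
     + (b*r3*sgk*E0x) * (b*r3*sgk*E0y) + (b*r3*sgk*E0x) * (b*r3*sgk*E0y)
   = (a^2 + b^2*(sgk*sgk)) * (E0x*E0y) + (b^2*(sq*sq)) * ((r3*Sx)*(r3*Sy)) + (a*b*sq) * (E0x*(r3*Sy) + (r3*Sx)*E0y)"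
proof -
  have "(a*E0x + b*r3*sq*Sx) * (a*E0y + b*r3*sq*Sy) + (b*r3*sgk*E0x) * (b*r3*sgk*E0y)
     + (b*r3*sgk*E0x) * (b*r3*sgk*E0y) + (b*r3*sgk*E0x) * (b*r3*sgk*E0y)
   = (a^2 + b^2*(sgk*sgk)) * (E0x*E0y) + (b^2*(sq*sq)) * ((r3*Sx)*(r3*Sy)) + (a*b*sq) * (E0x*(r3*Sy) + (r3*Sx)*E0y)
     + b^2*(sgk*sgk)*(E0x*E0y) * (3 * (r3 * r3) - 1)"
    by (simp add: power2_eq_square algebra_simps)
  then show ?thesis using assms by simp
qed

lemma xor_self_nat: "(x::nat) XOR x = 0"
  by (rule bit_eqI) (simp add: bit_xor_iff)

lemma xor_cancel_left: "(x::nat) XOR (x XOR y) = y"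
  by (rule bit_eqI) (auto simp: bit_xor_iff)

locale Lset =
  fixes n k u v :: nat
  assumes u: "u < 2^n" and v: "v < 2^n" and u0: "u \<noteq> 0" and v0: "v \<noteq> 0" and uv: "u \<noteq> v"
    and hu: "hw n u = k" and hv: "hw n v = k" and hwv: "hw n (u XOR v) = k"

context Lset
begin

lemma wl: "u XOR v < 2^n" using xor_lt[OF u v] .
lemma w0: "u XOR v \<noteq> 0" using uv xor_eq_0_iff by blast
lemma wu: "u XOR v \<noteq> u"
proof
  assume "u XOR v = u"
  then have "u XOR (u XOR v) = u XOR u" by simp
  then show False using v0 by (simp add: xor_cancel_left xor_self_nat)
qed
lemma wv: "u XOR v \<noteq> v"
proof
  assume "u XOR v = v"
  then have "(u XOR v) XOR v = v XOR v" by simp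
  then show False using u0 by (simp add: xor_xor_cancel xor_self_nat)
qed

lemma k1: "1 \<le> k" using hw_zero_iff[OF u] u0 hu by simp

lemma Lst_lt: "a \<in> {u, v, u XOR v} \<Longrightarrow> a < 2^n" using u v wl by auto
lemma Lst_hw: "a \<in> {u, v, u XOR v} \<Longrightarrow> hw n a = k" using hu hv hwv by auto

lemma sub_L: "a \<in> {u, v, u XOR v} \<Longrightarrow> b \<in> {u, v, u XOR v} \<Longrightarrow> sub n a b \<Longrightarrow> a = b"
  using sub_eq Lst_lt Lst_hw by metis

lemma not_sub3: "t < 2^n \<Longrightarrow> t \<noteq> 0 \<Longrightarrow> \<not> (sub n t u \<and> sub n t v \<and> sub n t (u XOR v))"
proof
  assume t: "t < 2^n" "t \<noteq> 0" and s: "sub n t u \<and> sub n t v \<and> sub n t (u XOR v)"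
  obtain i where "i < n" "bit t i" using t nat_eq_bits[OF t(1), of 0] by auto
  then show False using s by (auto simp: sub_def bit_xor_iff)
qed

lemma W_mem:
  assumes t: "t < 2^n" and tn: "t \<notin> {0, u, v, u XOR v}" and b: "b \<in> {u, v, u XOR v}" and s: "sub n t b"
  shows "b XOR t \<in> {x. 1 \<le> hw n x \<and> hw n x \<le> k - 1}" and "b XOR t < 2^n"
proof -
  have bl: "b < 2^n" and hb: "hw n b = k" using Lst_lt[OF b] Lst_hw[OF b] .
  have "hw n t \<noteq> 0" using hw_zero_iff[OF t] tn by auto
  moreover have "hw n t \<le> k" using sub_card(2)[OF s] hb by simp
  moreover have "hw n t \<noteq> k" using sub_eq[OF t bl s] hb tn b by auto
  ultimately show "b XOR t \<in> {x. 1 \<le> hw n x \<and> hw n x \<le> k - 1}"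
    using hw_xor_sub[OF s] hb by auto
  show "b XOR t < 2^n" using xor_lt[OF bl t] .
qed

definition gam :: "real \<Rightarrow> nat \<Rightarrow> real" where
  "gam g t = sqrt g ^ hw n t * sqrt (1 - g) ^ (k - hw n t)"

lemma kv_formula:
  assumes t: "t < 2^n" and x: "x < 2^n"
  shows "kv n g (psi_L u v a b) t x = complex_of_real a * (if t = 0 \<and> x = 0 then 1 else 0)
     + complex_of_real b * complex_of_real (1 / sqrt 3) *
       ((if sub n t u then complex_of_real (gam g t) * ket (u XOR t) x else 0)
      + (if sub n t v then complex_of_real (gam g t) * ket (v XOR t) x else 0)
      + (if sub n t (u XOR v) then complex_of_real (gam g t) * ket ((u XOR v) XOR t) x else 0))"
  unfolding kv_expand[OF u v] Kt_zero[OF x t] Kt_sub[OF x u t hu] Kt_sub[OF x v t hv] Kt_sub[OF x wl t hwv] gam_def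
  by simp

lemma kv0:
  assumes x: "x < 2^n"
  shows "kv n g (psi_L u v a b) 0 x = complex_of_real a * ket 0 x
     + complex_of_real b * complex_of_real (1 / sqrt 3) * complex_of_real (sqrt (1 - g) ^ k) * (ket u x + ket v x + ket (u XOR v) x)"
proof -
  have s: "sub n 0 c" for c by (simp add: sub_def)
  have z: "(0::nat) < 2^n" by simp
  have "gam g 0 = sqrt (1 - g) ^ k" by (simp add: gam_def hw_def)
  then show ?thesis unfolding kv_formula[OF z x] using s by (simp add: ket_def algebra_simps)
qed

lemma kva:
  assumes a: "c \<in> {u, v, u XOR v}" and x: "x < 2^n"
  shows "kv n g (psi_L u v a b) c x = complex_of_real b * complex_of_real (1 / sqrt 3) * complex_of_real (sqrt g ^ k) * ket 0 x"
proof -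
  have cl: "c < 2^n" using Lst_lt[OF a] .
  have c0: "c \<noteq> 0" using a u0 v0 w0 by auto
  have g: "gam g c = sqrt g ^ k" using Lst_hw[OF a] by (simp add: gam_def)
  have sc: "sub n z z" for z by (simp add: sub_def)
  have su: "sub n c u \<longleftrightarrow> c = u" using sub_L[OF a] a by (auto simp: sc)
  have sv: "sub n c v \<longleftrightarrow> c = v" using sub_L[OF a] a by (auto simp: sc)
  have sw: "sub n c (u XOR v) \<longleftrightarrow> c = u XOR v" using sub_L[OF a] a by (auto simp: sc)
  have d: "u \<noteq> u XOR v" "v \<noteq> u XOR v" using wu wv by auto
  show ?thesis unfolding kv_formula[OF cl x] su sv sw g
    using a c0 uv d by (auto simp: xor_self_nat)
qed

end

context Lset
begin

abbreviation "WW \<equiv> {x. 1 \<le> hw n x \<and> hw n x \<le> k - 1}"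

lemma kv_other:
  assumes t: "t < 2^n" and tn: "t \<notin> {0, u, v, u XOR v}"
  shows "mat_eq (2^n) (proj (kv n g (psi_L u v a b) t)) (\<lambda>x y. 0) \<or> cterm n WW (proj (kv n g (psi_L u v a b) t))"
proof -
  let ?r = "b * (1 / sqrt 3) * gam g t"
  have t0: "t \<noteq> 0" using tn by auto
  have kvt: "kv n g (psi_L u v a b) t x = complex_of_real ?r *
       ((if sub n t u then ket (u XOR t) x else 0) + (if sub n t v then ket (v XOR t) x else 0)
        + (if sub n t (u XOR v) then ket ((u XOR v) XOR t) x else 0))" if x: "x < 2^n" for x
    unfolding kv_formula[OF t x] using t0 by (simp add: algebra_simps)
  have Wu: "sub n t u \<Longrightarrow> u XOR t \<in> WW \<and> u XOR t < 2^n" using W_mem[OF t tn, of u] by simp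
  have Wv: "sub n t v \<Longrightarrow> v XOR t \<in> WW \<and> v XOR t < 2^n" using W_mem[OF t tn, of v] by simp
  have Ww: "sub n t (u XOR v) \<Longrightarrow> (u XOR v) XOR t \<in> WW \<and> (u XOR v) XOR t < 2^n" using W_mem[OF t tn, of "u XOR v"] by simp
  have d1: "u XOR t \<noteq> v XOR t" using uv by (metis xor_xor_cancel)
  have d2: "u XOR t \<noteq> (u XOR v) XOR t" using wu by (metis xor_xor_cancel)
  have d3: "v XOR t \<noteq> (u XOR v) XOR t" using wv by (metis xor_xor_cancel)
  have n3: "\<not> (sub n t u \<and> sub n t v \<and> sub n t (u XOR v))" using not_sub3[OF t t0] .
  consider (z) "\<not> sub n t u" "\<not> sub n t v" "\<not> sub n t (u XOR v)"
    | (s1) "sub n t u" "\<not> sub n t v" "\<not> sub n t (u XOR v)"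
    | (s2) "\<not> sub n t u" "sub n t v" "\<not> sub n t (u XOR v)"
    | (s3) "\<not> sub n t u" "\<not> sub n t v" "sub n t (u XOR v)"
    | (p12) "sub n t u" "sub n t v" "\<not> sub n t (u XOR v)"
    | (p13) "sub n t u" "\<not> sub n t v" "sub n t (u XOR v)"
    | (p23) "\<not> sub n t u" "sub n t v" "sub n t (u XOR v)"
    using n3 by blast
  then show ?thesis
  proof cases
    case z then show ?thesis using kvt by (simp add: mat_eq_def proj_def)
  next
    case s1 then show ?thesis using Wu kvt by (intro disjI2 cterm_single[of "u XOR t" n WW _ ?r]) simp_all
  next
    case s2 then show ?thesis using Wv kvt by (intro disjI2 cterm_single[of "v XOR t" n WW _ ?r]) simp_all
  next
    case s3 then show ?thesis using Ww kvt by (intro disjI2 cterm_single[of "(u XOR v) XOR t" n WW _ ?r]) simp_all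
  next
    case p12 then show ?thesis using Wu Wv kvt d1 by (intro disjI2 cterm_pair[of "u XOR t" n "v XOR t" WW _ ?r]) simp_all
  next
    case p13 then show ?thesis using Wu Ww kvt d2 by (intro disjI2 cterm_pair[of "u XOR t" n "(u XOR v) XOR t" WW _ ?r]) simp_all
  next
    case p23 then show ?thesis using Wv Ww kvt d3 by (intro disjI2 cterm_pair[of "v XOR t" n "(u XOR v) XOR t" WW _ ?r]) simp_all
  qed
qed

lemma cnj_ket[simp]: "cnj (ket p x) = ket p x" by (simp add: ket_def)

lemma decomp:
  assumes g0: "0 \<le> g" and g1: "g \<le> 1"
  shows "\<exists>\<Omega>. mat_eq (2^n) (rho_L n u v a b g)
     (\<lambda>x y. complex_of_real (a\<^sup>2 + b\<^sup>2 * g ^ k) * proj (ket 0) x y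
          + complex_of_real (b\<^sup>2 * (1 - g) ^ k) * proj (D_L u v) x y
          + complex_of_real (a * b * sqrt (1 - g) ^ k) * (ket 0 x * cnj (D_L u v y) + D_L u v x * cnj (ket 0 y))
          + \<Omega> x y) \<and> stab_cone_on n WW \<Omega>"
proof -
  let ?\<psi> = "psi_L u v a b"
  let ?f = "\<lambda>t x y. kv n g ?\<psi> t x * cnj (kv n g ?\<psi> t y)"
  define T where "T = {..<2^n} - {0, u, v, u XOR v}"
  define \<Omega> where "\<Omega> = (\<lambda>x y. \<Sum>t\<in>T. ?f t x y)"
  have cone: "stab_cone_on n WW \<Omega>"
  proof -
    have "stab_cone_on n WW (\<lambda>x y. \<Sum>t\<in>T. proj (kv n g ?\<psi> t) x y)"
    proof (rule cone_sum)
      show "finite T" by (simp add: T_def)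
      fix t assume "t \<in> T"
      then have "t < 2^n" "t \<notin> {0, u, v, u XOR v}" by (auto simp: T_def)
      then show "mat_eq (2^n) (proj (kv n g ?\<psi> t)) (\<lambda>x y. 0) \<or> cterm n WW (proj (kv n g ?\<psi> t))"
        by (rule kv_other)
    qed
    then show ?thesis by (simp add: \<Omega>_def proj_def)
  qed
  have split: "{..<2^n} = {0, u, v, u XOR v} \<union> T" unfolding T_def using u v wl by auto
  have disj: "{0, u, v, u XOR v} \<inter> T = {}" unfolding T_def by auto
  let ?r3 = "complex_of_real (1 / sqrt 3)" and ?sq = "complex_of_real (sqrt (1 - g) ^ k)"
    and ?sgk = "complex_of_real (sqrt g ^ k)"
  have r3: "?r3 * ?r3 = 1/3"
    by (simp flip: of_real_mult)
  have sq: "?sq * ?sq = complex_of_real ((1 - g) ^ k)" using g1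
    by (simp flip: of_real_mult power_mult_distrib)
  have sgk: "?sgk * ?sgk = complex_of_real (g ^ k)" using g0
    by (simp flip: of_real_mult power_mult_distrib)
  have "mat_eq (2^n) (rho_L n u v a b g)
     (\<lambda>x y. complex_of_real (a\<^sup>2 + b\<^sup>2 * g ^ k) * proj (ket 0) x y
          + complex_of_real (b\<^sup>2 * (1 - g) ^ k) * proj (D_L u v) x y
          + complex_of_real (a * b * sqrt (1 - g) ^ k) * (ket 0 x * cnj (D_L u v y) + D_L u v x * cnj (ket 0 y))
          + \<Omega> x y)"
    unfolding mat_eq_def
  proof (intro allI impI)
    fix x y :: nat assume x: "x < 2^n" and y: "y < 2^n"
    let ?Sx = "ket u x + ket v x + ket (u XOR v) x" and ?Sy = "ket u y + ket v y + ket (u XOR v) y"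
    have "rho_L n u v a b g x y = (\<Sum>t<2^n. ?f t x y)"
      unfolding rho_L_def chan_eq ..
    also have "\<dots> = (\<Sum>t\<in>{0, u, v, u XOR v}. ?f t x y) + \<Omega> x y"
      unfolding split \<Omega>_def by (rule sum.union_disjoint) (auto simp: disj T_def)
    also have "(\<Sum>t\<in>{0, u, v, u XOR v}. ?f t x y) = ?f 0 x y + ?f u x y + ?f v x y + ?f (u XOR v) x y"
      using u0 v0 w0 uv wu wv by (simp add: add.assoc)
    also have "?f 0 x y + ?f u x y + ?f v x y + ?f (u XOR v) x y
       = (complex_of_real a * ket 0 x + complex_of_real b * ?r3 * ?sq * ?Sx) * (complex_of_real a * ket 0 y + complex_of_real b * ?r3 * ?sq * ?Sy)
         + (complex_of_real b * ?r3 * ?sgk * ket 0 x) * (complex_of_real b * ?r3 * ?sgk * ket 0 y)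
         + (complex_of_real b * ?r3 * ?sgk * ket 0 x) * (complex_of_real b * ?r3 * ?sgk * ket 0 y)
         + (complex_of_real b * ?r3 * ?sgk * ket 0 x) * (complex_of_real b * ?r3 * ?sgk * ket 0 y)"
    proof -
      have mu: "u \<in> {u, v, u XOR v}" and mv: "v \<in> {u, v, u XOR v}" and mw: "u XOR v \<in> {u, v, u XOR v}" by auto
      show ?thesis unfolding kv0[OF x] kv0[OF y] kva[OF mu x] kva[OF mu y] kva[OF mv x] kva[OF mv y] kva[OF mw x] kva[OF mw y]
        by simp
    qed
    also have "\<dots> = (complex_of_real a ^ 2 + complex_of_real b ^ 2 * (?sgk * ?sgk)) * (ket 0 x * ket 0 y)
        + (complex_of_real b ^ 2 * (?sq * ?sq)) * ((?r3 * ?Sx) * (?r3 * ?Sy))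
        + (complex_of_real a * complex_of_real b * ?sq) * (ket 0 x * (?r3 * ?Sy) + (?r3 * ?Sx) * ket 0 y)"
      by (rule main_alg[OF r3])
    also have "\<dots> = complex_of_real (a\<^sup>2 + b\<^sup>2 * g ^ k) * proj (ket 0) x y
          + complex_of_real (b\<^sup>2 * (1 - g) ^ k) * proj (D_L u v) x y
          + complex_of_real (a * b * sqrt (1 - g) ^ k) * (ket 0 x * cnj (D_L u v y) + D_L u v x * cnj (ket 0 y))"
      unfolding sq sgk by (simp add: proj_def D_L_def)
    finally show "rho_L n u v a b g x y = complex_of_real (a\<^sup>2 + b\<^sup>2 * g ^ k) * proj (ket 0) x y
          + complex_of_real (b\<^sup>2 * (1 - g) ^ k) * proj (D_L u v) x y
          + complex_of_real (a * b * sqrt (1 - g) ^ k) * (ket 0 x * cnj (D_L u v y) + D_L u v x * cnj (ket 0 y))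
          + \<Omega> x y" .
  qed
  then show ?thesis using cone by blast
qed

end

lemma kraus_factor:
  assumes "0 \<le> g" "g \<le> 1"
  shows "(\<Sum>\<xi>\<in>{False, True}. \<Sum>\<tau>\<in>{False, True}. ad_kraus g \<tau> \<xi> p * cnj (ad_kraus g \<tau> \<xi> q)) = (if p = q then 1 else 0)"
proof -
  have s1: "complex_of_real (sqrt g) * complex_of_real (sqrt g) = complex_of_real g"
    using assms by (simp flip: of_real_mult)
  have s2: "complex_of_real (sqrt (1 - g)) * complex_of_real (sqrt (1 - g)) = complex_of_real (1 - g)"
    using assms by (simp flip: of_real_mult)
  show ?thesis
    by (cases p; cases q) (simp_all add: ad_kraus_def s1 s2)
qed

lemma Kt_tp:
  assumes a: "a < 2^n" and b: "b < 2^n" and g: "0 \<le> g" "g \<le> 1"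
  shows "(\<Sum>x<2^n. \<Sum>t<2^n. Kt n g t x a * cnj (Kt n g t x b)) = (if a = b then 1 else 0)"
proof -
  let ?F = "\<lambda>i \<xi> \<tau>. ad_kraus g \<tau> \<xi> (bit a i) * cnj (ad_kraus g \<tau> \<xi> (bit b i))"
  have "(\<Sum>x::nat<2^n. \<Sum>t::nat<2^n. Kt n g t x a * cnj (Kt n g t x b))
      = (\<Sum>x::nat<2^n. \<Sum>t::nat<2^n. \<Prod>i<n. ?F i (bit x i) (bit t i))"
    by (simp add: Kt_def tensor_def prod.distrib)
  also have "\<dots> = (\<Sum>x::nat<2^n. \<Prod>i<n. ?F i (bit x i) False + ?F i (bit x i) True)"
    by (rule sum.cong[OF refl], rule sum_bits_prod)
  also have "\<dots> = (\<Prod>i<n. (?F i False False + ?F i False True) + (?F i True False + ?F i True True))"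
    by (rule sum_bits_prod)
  also have "\<dots> = (\<Prod>i<n. if bit a i = bit b i then 1 else 0)"
  proof (rule prod.cong[OF refl])
    fix i
    have "(\<Sum>\<xi>\<in>{False, True}. \<Sum>\<tau>\<in>{False, True}. ?F i \<xi> \<tau>) = (if bit a i = bit b i then 1 else 0)"
      by (rule kraus_factor[OF g])
    then show "(?F i False False + ?F i False True) + (?F i True False + ?F i True True) = (if bit a i = bit b i then 1 else 0)"
      by simp
  qed
  also have "\<dots> = (if a = b then 1 else 0)"
    using nat_eq_bits[OF a b] by (simp add: prod_if_zero)
  finally show ?thesis .
qed

lemma chan_trace:
  assumes g: "0 \<le> g" "g \<le> 1"
  shows "(\<Sum>x<2^n. ad_channel n g (proj \<psi>) x x) = (\<Sum>l<2^n. \<psi> l * cnj (\<psi> l))"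
proof -
  let ?N = "2^n::nat"
  let ?K = "\<lambda>t x l. Kt n g t x l"
  have "(\<Sum>x<?N. ad_channel n g (proj \<psi>) x x) = (\<Sum>x<?N. \<Sum>t<?N. kv n g \<psi> t x * cnj (kv n g \<psi> t x))"
    by (simp add: chan_eq)
  also have "\<dots> = (\<Sum>x<?N. \<Sum>t<?N. \<Sum>l<?N. \<Sum>m<?N. (\<psi> l * cnj (\<psi> m)) * (?K t x l * cnj (?K t x m)))"
    by (simp add: kv_def sum_product mult_ac)
  also have "\<dots> = (\<Sum>x<?N. \<Sum>l<?N. \<Sum>t<?N. \<Sum>m<?N. (\<psi> l * cnj (\<psi> m)) * (?K t x l * cnj (?K t x m)))"
    by (rule sum.cong[OF refl], rule sum.swap)
  also have "\<dots> = (\<Sum>l<?N. \<Sum>x<?N. \<Sum>t<?N. \<Sum>m<?N. (\<psi> l * cnj (\<psi> m)) * (?K t x l * cnj (?K t x m)))"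
    by (rule sum.swap)
  also have "\<dots> = (\<Sum>l<?N. \<Sum>x<?N. \<Sum>m<?N. \<Sum>t<?N. (\<psi> l * cnj (\<psi> m)) * (?K t x l * cnj (?K t x m)))"
    by (rule sum.cong[OF refl], rule sum.cong[OF refl], rule sum.swap)
  also have "\<dots> = (\<Sum>l<?N. \<Sum>m<?N. \<Sum>x<?N. \<Sum>t<?N. (\<psi> l * cnj (\<psi> m)) * (?K t x l * cnj (?K t x m)))"
    by (rule sum.cong[OF refl], rule sum.swap)
  also have "\<dots> = (\<Sum>l<?N. \<Sum>m<?N. (\<psi> l * cnj (\<psi> m)) * (\<Sum>x<?N. \<Sum>t<?N. ?K t x l * cnj (?K t x m)))"
    by (simp add: sum_distrib_left)
  also have "\<dots> = (\<Sum>l<?N. \<Sum>m<?N. if m = l then \<psi> l * cnj (\<psi> l) else 0)"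
    by (intro sum.cong refl) (auto simp: Kt_tp[OF _ _ g])
  also have "\<dots> = (\<Sum>l<?N. \<psi> l * cnj (\<psi> l))"
    by simp
  finally show ?thesis .
qed

lemma main_alg2:
  fixes E0x E0y Sx Sy r3 p0 pL cL :: complex
  assumes "r3 * r3 = 1/3"
  shows "(2*pL/3 + 2*cL*r3) * ((1/2) * (E0x + Sx) * ((1/2) * (E0y + Sy)))
       + (2*pL/3 - 2*cL*r3) * ((1/2) * (Sx - E0x) * ((1/2) * (Sy - E0y)))
       + (p0 - pL/3) * (E0x * E0y)
     = p0 * (E0x * E0y) + pL * ((r3 * Sx) * (r3 * Sy)) + cL * (E0x * (r3 * Sy) + (r3 * Sx) * E0y)"
proof -
  have "(2*pL/3 + 2*cL*r3) * ((1/2) * (E0x + Sx) * ((1/2) * (E0y + Sy)))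
       + (2*pL/3 - 2*cL*r3) * ((1/2) * (Sx - E0x) * ((1/2) * (Sy - E0y)))
       + (p0 - pL/3) * (E0x * E0y)
     = p0 * (E0x * E0y) + pL * ((r3 * Sx) * (r3 * Sy)) + cL * (E0x * (r3 * Sy) + (r3 * Sx) * E0y)
       + pL * (Sx * Sy) * (1/3 - r3 * r3)"
    by (simp add: field_simps)
  then show ?thesis using assms by simp
qed

context Lset
begin

lemma psi_norm: "(\<Sum>l<2^n. psi_L u v a b l * cnj (psi_L u v a b l)) = complex_of_real (a\<^sup>2 + b\<^sup>2)"
proof -
  have r3: "complex_of_real (1 / sqrt 3) * complex_of_real (1 / sqrt 3) = 1/3"
    by (simp flip: of_real_mult)
  have pt: "psi_L u v a b l * cnj (psi_L u v a b l)
      = complex_of_real (a\<^sup>2) * ket 0 l + complex_of_real (b\<^sup>2 / 3) * (ket u l + ket v l + ket (u XOR v) l)" for l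
  proof -
    have d: "u \<noteq> 0" "v \<noteq> 0" "u XOR v \<noteq> 0" "u \<noteq> v" "u \<noteq> u XOR v" "v \<noteq> u XOR v"
      using u0 v0 w0 uv wu wv by auto
    show ?thesis
      unfolding psi_L_def D_L_def ket_def using d r3
      by (auto simp: power2_eq_square algebra_simps)
  qed
  have s1: "(\<Sum>l<2^n. ket c l) = 1" if "c < 2^n" for c
    using sum_ket[OF that, of "\<lambda>_. 1"] by simp
  show ?thesis
    unfolding pt sum.distrib sum_distrib_left[symmetric]
    using s1[of 0] s1[OF u] s1[OF v] s1[OF wl] by simp
qed

lemma rho_trace:
  assumes g: "0 \<le> g" "g \<le> 1" and ab: "a\<^sup>2 + b\<^sup>2 = 1"
  shows "(\<Sum>x<2^n. rho_L n u v a b g x x) = 1"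
  unfolding rho_L_def chan_trace[OF g] psi_norm ab by simp

end

context Lset
begin

lemma exists_j: "\<exists>j<n. bit u j \<and> \<not> bit v j"
proof (rule ccontr)
  assume "\<not> (\<exists>j<n. bit u j \<and> \<not> bit v j)"
  then have "sub n u v" by (auto simp: sub_def)
  then have "u = v" using sub_eq[OF u v] hu hv by simp
  then show False using uv by simp
qed

lemma exists_l: "\<exists>l<n. bit v l \<and> \<not> bit u l"
proof (rule ccontr)
  assume "\<not> (\<exists>l<n. bit v l \<and> \<not> bit u l)"
  then have "sub n v u" by (auto simp: sub_def)
  then have "v = u" using sub_eq[OF v u] hu hv by simp
  then show False using uv by simp
qed

lemma D_L_L: "p \<in> {u, v, u XOR v} \<Longrightarrow> D_L u v p = complex_of_real (1 / sqrt 3)"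
  using uv wu wv by (auto simp: D_L_def ket_def)

lemma D_L_0: "D_L u v 0 = 0"
  using u0 v0 w0 by (simp add: D_L_def ket_def)

lemma notWW: "p \<in> {u, v, u XOR v} \<Longrightarrow> p \<notin> WW"
  using Lst_hw k1 by auto

lemma zero_notWW: "0 \<notin> WW" by (simp add: hw_def)

lemma poly_iff:
  assumes g0: "0 \<le> g" and g1: "g \<le> 1" and a: "a > 0" and b: "b > 0" and ab: "a\<^sup>2 + b\<^sup>2 = 1"
  shows "rho_L n u v a b g \<in> stab_polytope n \<longleftrightarrow>
     (a\<^sup>2 + b\<^sup>2 * g ^ k \<ge> b\<^sup>2 * (1 - g) ^ k / 3 \<and> a * b * sqrt (1 - g) ^ k \<le> b\<^sup>2 * (1 - g) ^ k / sqrt 3)"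
proof -
  define p0 where "p0 = a\<^sup>2 + b\<^sup>2 * g ^ k"
  define pL where "pL = b\<^sup>2 * (1 - g) ^ k"
  define cL where "cL = a * b * sqrt (1 - g) ^ k"
  let ?N = "2^n::nat"
  let ?r3 = "complex_of_real (1 / sqrt 3)"
  obtain \<Omega> where E: "mat_eq ?N (rho_L n u v a b g)
     (\<lambda>x y. complex_of_real p0 * proj (ket 0) x y + complex_of_real pL * proj (D_L u v) x y
          + complex_of_real cL * (ket 0 x * cnj (D_L u v y) + D_L u v x * cnj (ket 0 y)) + \<Omega> x y)"
    and C: "stab_cone_on n WW \<Omega>"
    using decomp[OF g0 g1, of a b] unfolding p0_def pL_def cL_def by blast
  have cL0: "cL \<ge> 0" unfolding cL_def using a b g1 by simp
  have pL0: "pL \<ge> 0" unfolding pL_def using g1 by simp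
  have r3: "?r3 * ?r3 = 1/3" by (simp flip: of_real_mult)
  have ent: "rho_L n u v a b g p q = complex_of_real (pL / 3)" if p: "p \<in> {u, v, u XOR v}" and q: "q \<in> {u, v, u XOR v}" for p q
  proof -
    have pl: "p < ?N" and ql: "q < ?N" using Lst_lt p q by auto
    have p0': "p \<noteq> 0" "q \<noteq> 0" using p q u0 v0 w0 by auto
    have "\<Omega> p q = 0" using cone_outside[OF C pl ql] notWW[OF p] by blast
    then show ?thesis using E pl ql p0' D_L_L[OF p] D_L_L[OF q] r3
      by (simp add: mat_eq_def proj_def ket_def)
  qed
  have r00: "rho_L n u v a b g 0 0 = complex_of_real p0"
  proof -
    have "\<Omega> 0 0 = 0" using cone_outside[OF C, of 0 0] zero_notWW by simp
    then show ?thesis using E by (simp add: mat_eq_def proj_def ket_def D_L_0)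
  qed
  have r0u: "rho_L n u v a b g 0 u = complex_of_real (cL / sqrt 3)"
  proof -
    have "\<Omega> 0 u = 0" using cone_outside[OF C _ u, of 0] zero_notWW by simp
    then show ?thesis using E u u0 D_L_L[of u] D_L_0 by (simp add: mat_eq_def proj_def ket_def)
  qed
  have s3: "sqrt 3 * sqrt 3 = (3::real)" by simp
  show ?thesis
    unfolding p0_def[symmetric] pL_def[symmetric] cL_def[symmetric]
  proof
    assume P: "rho_L n u v a b g \<in> stab_polytope n"
    have B1: "pL / 3 \<le> Re (rho_L n u v a b g 0 0)" and B2: "cmod (rho_L n u v a b g 0 u) \<le> pL / 3"
      using polytope_bound[OF P u v, of "pL / 3"] ent by auto
    have "pL / 3 \<le> p0" using B1 r00 by simp
    moreover have "cL \<le> pL / sqrt 3"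
    proof -
      have "cmod (rho_L n u v a b g 0 u) = cL / sqrt 3"
        unfolding r0u norm_of_real using cL0 by simp
      then have "cL / sqrt 3 \<le> pL / 3" using B2 by simp
      then have "cL \<le> pL / 3 * sqrt 3" by (simp add: divide_le_eq mult.commute)
      also have "pL / 3 * sqrt 3 = pL / sqrt 3"
        by (simp add: field_simps s3)
      finally show ?thesis .
    qed
    ultimately show "pL / 3 \<le> p0 \<and> cL \<le> pL / sqrt 3" by simp
  next
    assume H: "pL / 3 \<le> p0 \<and> cL \<le> pL / sqrt 3"
    obtain j where j: "j < n" "bit u j" "\<not> bit v j" using exists_j by blast
    obtain l where l: "l < n" "bit v l" "\<not> bit u l" using exists_l by blast
    let ?S = "\<lambda>x. ket u x + ket v x + ket (u XOR v) x"
    define Lp where "Lp = (\<lambda>x. if x = 0 \<or> x = u \<or> x = v \<or> x = u XOR v then 1/2 else (0::complex))"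
    define Lm where "Lm = (\<lambda>x. if x = 0 then -1/2 else if x = u \<or> x = v \<or> x = u XOR v then 1/2 else (0::complex))"
    have stLp: "stab_state n Lp" unfolding Lp_def using stab_L(1)[OF u v j(1) l(1) j(2) j(3) l(2) l(3)] .
    have stLm: "stab_state n Lm" unfolding Lm_def using stab_L(2)[OF u v j(1) l(1) j(2) j(3) l(2) l(3)] .
    have d: "u \<noteq> 0" "v \<noteq> 0" "u XOR v \<noteq> 0" "u \<noteq> v" "u \<noteq> u XOR v" "v \<noteq> u XOR v"
      using u0 v0 w0 uv wu wv by auto
    have Lpx: "Lp x = (1/2) * (ket 0 x + ?S x)" for x
      unfolding Lp_def ket_def using d by auto
    have Lmx: "Lm x = (1/2) * (?S x - ket 0 x)" for x
      unfolding Lm_def ket_def using d by auto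
    define wp where "wp = 2 * pL / 3 + 2 * cL * (1 / sqrt 3)"
    define wm where "wm = 2 * pL / 3 - 2 * cL * (1 / sqrt 3)"
    define cc where "cc = p0 - pL / 3"
    have wp0: "wp \<ge> 0" unfolding wp_def using pL0 cL0 by simp
    have wm0: "wm \<ge> 0"
    proof -
      have "cL * (1 / sqrt 3) \<le> pL / sqrt 3 * (1 / sqrt 3)"
        using H by (intro mult_right_mono) auto
      also have "pL / sqrt 3 * (1 / sqrt 3) = pL / 3" by (simp add: field_simps s3)
      finally show ?thesis unfolding wm_def by simp
    qed
    have cc0: "cc \<ge> 0" unfolding cc_def using H by simp
    have ct: "cterm n UNIV (\<lambda>x y. complex_of_real w * proj \<phi> x y)" if "w \<ge> 0" "stab_state n \<phi>" for w \<phi>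
      unfolding cterm_def using that mat_eq_refl by blast
    have Cfull: "stab_cone_on n UNIV (\<lambda>x y. \<Omega> x y + complex_of_real wp * proj Lp x y
        + complex_of_real wm * proj Lm x y + complex_of_real cc * proj (ket 0) x y)"
      by (intro cone_add_term disjI2 ct cone_mono[OF C] wp0 wm0 cc0 stLp stLm stab_ket) auto
    have ME: "mat_eq ?N (rho_L n u v a b g) (\<lambda>x y. \<Omega> x y + complex_of_real wp * proj Lp x y
        + complex_of_real wm * proj Lm x y + complex_of_real cc * proj (ket 0) x y)"
      unfolding mat_eq_def
    proof (intro allI impI)
      fix x y :: nat assume x: "x < ?N" and y: "y < ?N"
      have "complex_of_real wp * proj Lp x y + complex_of_real wm * proj Lm x y + complex_of_real cc * proj (ket 0) x y
         = (2 * complex_of_real pL / 3 + 2 * complex_of_real cL * ?r3) * ((1/2) * (ket 0 x + ?S x) * ((1/2) * (ket 0 y + ?S y)))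
         + (2 * complex_of_real pL / 3 - 2 * complex_of_real cL * ?r3) * ((1/2) * (?S x - ket 0 x) * ((1/2) * (?S y - ket 0 y)))
         + (complex_of_real p0 - complex_of_real pL / 3) * (ket 0 x * ket 0 y)"
        unfolding wp_def wm_def cc_def proj_def Lpx Lmx by simp
      also have "\<dots> = complex_of_real p0 * (ket 0 x * ket 0 y) + complex_of_real pL * ((?r3 * ?S x) * (?r3 * ?S y))
          + complex_of_real cL * (ket 0 x * (?r3 * ?S y) + (?r3 * ?S x) * ket 0 y)"
        by (rule main_alg2[OF r3])
      also have "\<dots> = complex_of_real p0 * proj (ket 0) x y + complex_of_real pL * proj (D_L u v) x y
          + complex_of_real cL * (ket 0 x * cnj (D_L u v y) + D_L u v x * cnj (ket 0 y))"
        by (simp add: proj_def D_L_def)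
      finally show "rho_L n u v a b g x y = \<Omega> x y + complex_of_real wp * proj Lp x y
        + complex_of_real wm * proj Lm x y + complex_of_real cc * proj (ket 0) x y"
        using E x y by (simp add: mat_eq_def algebra_simps)
    qed
    show "rho_L n u v a b g \<in> stab_polytope n"
      by (rule cone_polytope[OF cone_mat_eq[OF Cfull ME] rho_trace[OF g0 g1 ab]])
  qed
qed

end

lemma f_strict_mono:
  fixes x y r :: real and k :: nat
  assumes k: "k \<ge> 1" and xy: "0 \<le> x" "x < y" "y \<le> 1"
  shows "r\<^sup>2 + x ^ k - (1 - x) ^ k / 3 < r\<^sup>2 + y ^ k - (1 - y) ^ k / 3"
proof -
  have "x ^ k < y ^ k" using xy k by (intro power_strict_mono) auto
  moreover have "(1 - y) ^ k \<le> (1 - x) ^ k" using xy by (intro power_mono) auto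
  ultimately show ?thesis by simp
qed

lemma real_part:
  fixes r :: real and k :: nat
  assumes k: "k \<ge> 1" and r0: "0 < r" and r1: "r < 1 / sqrt 3"
  defines "gp \<equiv> 1 - (sqrt 3 * r) powr (2 / real k)"
  shows "\<exists>!g. 0 < g \<and> g < gp \<and> r\<^sup>2 + g ^ k = (1 - g) ^ k / 3"
    and "\<And>g \<gamma>. 0 < g \<Longrightarrow> g < gp \<Longrightarrow> r\<^sup>2 + g ^ k = (1 - g) ^ k / 3 \<Longrightarrow> 0 \<le> \<gamma> \<Longrightarrow> \<gamma> \<le> 1 \<Longrightarrow>
          ((r\<^sup>2 + \<gamma> ^ k \<ge> (1 - \<gamma>) ^ k / 3 \<and> r * sqrt (1 - \<gamma>) ^ k \<le> (1 - \<gamma>) ^ k / sqrt 3)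
            \<longleftrightarrow> (g \<le> \<gamma> \<and> \<gamma> \<le> gp) \<or> \<gamma> = 1)"
    and "\<And>g. 0 < g \<Longrightarrow> g < gp \<Longrightarrow> r\<^sup>2 + g ^ k = (1 - g) ^ k / 3 \<Longrightarrow> k = 2 \<Longrightarrow>
          g = (sqrt (3 - 6 * r\<^sup>2) - 1) / 2 \<and> gp = 1 - sqrt 3 * r"
proof -
  define f where "f x = r\<^sup>2 + x ^ k - (1 - x) ^ k / 3" for x :: real
  have fmono: "\<And>x y. 0 \<le> x \<Longrightarrow> x < y \<Longrightarrow> y \<le> 1 \<Longrightarrow> f x < f y"
    unfolding f_def using f_strict_mono[OF k] by blast
  have s3: "sqrt 3 * sqrt 3 = (3::real)" by simp
  define c where "c = sqrt 3 * r"
  have c0: "0 < c" unfolding c_def using r0 by simp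
  have c1: "c < 1" unfolding c_def using r1 by (simp add: field_simps)
  have kpos: "real k > 0" using k by simp
  have cp: "c powr (2 / real k) > 0" using c0 by simp
  have cp1: "c powr (2 / real k) < 1" using powr_less_mono2[of "2 / real k" c 1] c0 c1 kpos by simp
  have gp_def': "gp = 1 - c powr (2 / real k)" unfolding gp_def c_def ..
  have gp0: "0 < gp" and gp1: "gp < 1" using cp cp1 gp_def' by auto
  have cpk: "(c powr (2 / real k)) ^ k = c\<^sup>2"
  proof -
    have "(c powr (2 / real k)) ^ k = c powr (2 / real k * real k)"
      using c0 by (simp add: powr_powr powr_realpow[symmetric] mult.commute)
    also have "\<dots> = c powr 2" using kpos by simp
    also have "\<dots> = c\<^sup>2" using c0 by (simp add: powr_realpow)
    finally show ?thesis .
  qed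
  have fgp: "f gp > 0"
  proof -
    have "(1 - gp) ^ k = 3 * r\<^sup>2" using cpk gp_def' unfolding c_def by (simp add: power_mult_distrib)
    then have "f gp = gp ^ k" unfolding f_def by simp
    then show ?thesis using gp0 by simp
  qed
  have f0: "f 0 < 0"
  proof -
    have "r\<^sup>2 < (1 / sqrt 3)\<^sup>2" using r0 r1 by (intro power_strict_mono) auto
    then have "r\<^sup>2 < 1/3" by (simp add: power_divide)
    then show ?thesis unfolding f_def using k by (simp add: zero_power)
  qed
  have cont: "\<forall>x. 0 \<le> x \<and> x \<le> gp \<longrightarrow> isCont f x" unfolding f_def by (auto intro!: continuous_intros)
  obtain g0 where g0: "0 \<le> g0" "g0 \<le> gp" "f g0 = 0"
    using IVT[of f 0 0 gp] f0 fgp gp0 cont by force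
  have g0pos: "0 < g0" using g0 f0 by (cases "g0 = 0") auto
  have g0lt: "g0 < gp" using g0 fgp by (cases "g0 = gp") auto
  have root_iff: "\<And>g. 0 < g \<Longrightarrow> g < gp \<Longrightarrow> (r\<^sup>2 + g ^ k = (1 - g) ^ k / 3 \<longleftrightarrow> f g = 0)"
    unfolding f_def by auto
  have uniq: "\<And>g. 0 < g \<Longrightarrow> g < gp \<Longrightarrow> f g = 0 \<Longrightarrow> g = g0"
  proof -
    fix g assume "0 < g" "g < gp" "f g = 0"
    then show "g = g0" using fmono[of g g0] fmono[of g0 g] g0 g0pos g0lt gp1
      by (cases "g < g0"; cases "g0 < g") auto
  qed
  show "\<exists>!g. 0 < g \<and> g < gp \<and> r\<^sup>2 + g ^ k = (1 - g) ^ k / 3"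
  proof (rule ex1I[of _ g0])
    show "0 < g0 \<and> g0 < gp \<and> r\<^sup>2 + g0 ^ k = (1 - g0) ^ k / 3" using g0pos g0lt g0 root_iff by blast
  next
    fix g assume "0 < g \<and> g < gp \<and> r\<^sup>2 + g ^ k = (1 - g) ^ k / 3"
    then show "g = g0" using uniq root_iff by blast
  qed
  show "((r\<^sup>2 + \<gamma> ^ k \<ge> (1 - \<gamma>) ^ k / 3 \<and> r * sqrt (1 - \<gamma>) ^ k \<le> (1 - \<gamma>) ^ k / sqrt 3)
            \<longleftrightarrow> (g \<le> \<gamma> \<and> \<gamma> \<le> gp) \<or> \<gamma> = 1)"
    if g: "0 < g" "g < gp" "r\<^sup>2 + g ^ k = (1 - g) ^ k / 3" and ga: "0 \<le> \<gamma>" "\<gamma> \<le> 1" for g \<gamma>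
  proof (cases "\<gamma> = 1")
    case True
    then show ?thesis using k by (simp add: zero_power)
  next
    case False
    then have ga1: "\<gamma> < 1" using ga by simp
    have fg: "f g = 0" using g root_iff by blast
    have A: "(r\<^sup>2 + \<gamma> ^ k \<ge> (1 - \<gamma>) ^ k / 3) \<longleftrightarrow> g \<le> \<gamma>"
    proof
      assume "r\<^sup>2 + \<gamma> ^ k \<ge> (1 - \<gamma>) ^ k / 3"
      then have "f \<gamma> \<ge> 0" unfolding f_def by simp
      then show "g \<le> \<gamma>" using fmono[of \<gamma> g] fg ga g gp1 by (cases "\<gamma> < g") auto
    next
      assume "g \<le> \<gamma>"
      then have "f g \<le> f \<gamma>" using fmono[of g \<gamma>] g ga by (cases "g = \<gamma>") auto
      then show "r\<^sup>2 + \<gamma> ^ k \<ge> (1 - \<gamma>) ^ k / 3" using fg unfolding f_def by simp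
    qed
    have q0: "0 < 1 - \<gamma>" using ga1 by simp
    define s where "s = sqrt (1 - \<gamma>) ^ k"
    have s0: "0 < s" unfolding s_def using q0 by simp
    have ss: "(1 - \<gamma>) ^ k = s * s" unfolding s_def using q0
      by (simp flip: power_mult_distrib)
    have B1: "(r * s \<le> (1 - \<gamma>) ^ k / sqrt 3) \<longleftrightarrow> c \<le> s"
    proof -
      have "(r * s \<le> s * s / sqrt 3) \<longleftrightarrow> (r \<le> s / sqrt 3)"
        using s0 by (simp add: field_simps)
      also have "\<dots> \<longleftrightarrow> c \<le> s" unfolding c_def by (simp add: field_simps)
      finally show ?thesis unfolding ss .
    qed
    have B2: "c \<le> s \<longleftrightarrow> c powr (2 / real k) \<le> 1 - \<gamma>"
    proof -
      have sp: "s = (1 - \<gamma>) powr (real k / 2)"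
        unfolding s_def using q0 by (simp add: powr_half_sqrt[symmetric] powr_realpow[symmetric] powr_powr mult.commute)
      have "c \<le> s \<longleftrightarrow> c powr (2 / real k) \<le> s powr (2 / real k)"
      proof
        assume "c \<le> s" then show "c powr (2 / real k) \<le> s powr (2 / real k)"
          using c0 kpos by (intro powr_mono2) auto
      next
        assume h: "c powr (2 / real k) \<le> s powr (2 / real k)"
        show "c \<le> s"
        proof (rule ccontr)
          assume "\<not> c \<le> s"
          then have "s powr (2 / real k) < c powr (2 / real k)"
            using s0 kpos by (intro powr_less_mono2) auto
          then show False using h by simp
        qed
      qed
      also have "s powr (2 / real k) = 1 - \<gamma>"
        unfolding sp using q0 kpos by (simp add: powr_powr)
      finally show ?thesis .
    qed
    have B: "(r * sqrt (1 - \<gamma>) ^ k \<le> (1 - \<gamma>) ^ k / sqrt 3) \<longleftrightarrow> \<gamma> \<le> gp"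
      using B1 B2 gp_def' unfolding s_def by auto
    show ?thesis using A B False by auto
  qed
  show "g = (sqrt (3 - 6 * r\<^sup>2) - 1) / 2 \<and> gp = 1 - sqrt 3 * r"
    if g: "0 < g" "g < gp" "r\<^sup>2 + g ^ k = (1 - g) ^ k / 3" and k2: "k = 2" for g
  proof
    show "gp = 1 - sqrt 3 * r" unfolding gp_def' c_def k2 using c0 c_def by simp
    have "3 * r\<^sup>2 + 3 * g\<^sup>2 = (1 - g)\<^sup>2" using g(3) k2 by simp
    then have "(2 * g + 1)\<^sup>2 = 3 - 6 * r\<^sup>2" by (simp add: power2_eq_square algebra_simps)
    moreover have "sqrt ((2 * g + 1)\<^sup>2) = 2 * g + 1" using g(1) by simp
    ultimately have "sqrt (3 - 6 * r\<^sup>2) = 2 * g + 1" by simp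
    then show "g = (sqrt (3 - 6 * r\<^sup>2) - 1) / 2" by simp
  qed
qed

lemma bridge:
  fixes a b r x y s t :: real
  assumes b: "b > 0" and r: "r = a / b"
  shows "(a\<^sup>2 + b\<^sup>2 * x \<ge> b\<^sup>2 * y / 3 \<longleftrightarrow> r\<^sup>2 + x \<ge> y / 3)"
    and "(a * b * s \<le> b\<^sup>2 * t / sqrt 3 \<longleftrightarrow> r * s \<le> t / sqrt 3)"
proof -
  have a: "a = r * b" using r b by simp
  have b2: "b\<^sup>2 > 0" using b by simp
  have e1: "a\<^sup>2 + b\<^sup>2 * x = b\<^sup>2 * (r\<^sup>2 + x)" by (simp add: a power2_eq_square algebra_simps)
  have e2: "b\<^sup>2 * y / 3 = b\<^sup>2 * (y / 3)" by simp
  show "(a\<^sup>2 + b\<^sup>2 * x \<ge> b\<^sup>2 * y / 3 \<longleftrightarrow> r\<^sup>2 + x \<ge> y / 3)"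
    unfolding e1 e2 by (rule mult_le_cancel_left_pos[OF b2])
  have e3: "a * b * s = b\<^sup>2 * (r * s)" by (simp add: a power2_eq_square mult_ac)
  have e4: "b\<^sup>2 * t / sqrt 3 = b\<^sup>2 * (t / sqrt 3)" by simp
  show "(a * b * s \<le> b\<^sup>2 * t / sqrt 3 \<longleftrightarrow> r * s \<le> t / sqrt 3)"
    unfolding e3 e4 by (rule mult_le_cancel_left_pos[OF b2])
qed

theorem propositionS4:
  fixes n k u v :: nat and \<alpha> \<beta> r :: real
  assumes "u < 2^n" and "v < 2^n" and "u \<noteq> 0" and "v \<noteq> 0" and "u \<noteq> v"
    and "hw n u = k" and "hw n v = k" and "hw n (xor u v) = k"
    and "\<alpha> > 0" and "\<beta> > 0" and "\<alpha>\<^sup>2 + \<beta>\<^sup>2 = 1" and "r = \<alpha> / \<beta>"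
  shows
    "(\<forall>\<gamma>\<in>{0..1}.
        let q = 1 - \<gamma>; p0 = \<alpha>\<^sup>2 + \<beta>\<^sup>2 * \<gamma> ^ k; pL = \<beta>\<^sup>2 * q ^ k; cL = \<alpha> * \<beta> * sqrt q ^ k in
        (\<exists>\<Omega>. mat_eq (2^n) (rho_L n u v \<alpha> \<beta> \<gamma>)
                (\<lambda>x y. complex_of_real p0 * proj (ket 0) x y
                       + complex_of_real pL * proj (D_L u v) x y
                       + complex_of_real cL * (ket 0 x * cnj (D_L u v y) + D_L u v x * cnj (ket 0 y))
                       + \<Omega> x y)
             \<and> stab_cone_on n {x. 1 \<le> hw n x \<and> hw n x \<le> k - 1} \<Omega>)
        \<and> (rho_L n u v \<alpha> \<beta> \<gamma> \<in> stab_polytope n \<longleftrightarrow> p0 \<ge> pL / 3 \<and> cL \<le> pL / sqrt 3))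
     \<and> (0 < r \<and> r < 1 / sqrt 3 \<longrightarrow>
        (let \<gamma>p = 1 - (sqrt 3 * r) powr (2 / real k) in
          (\<exists>!g. 0 < g \<and> g < \<gamma>p \<and> r\<^sup>2 + g ^ k = (1 - g) ^ k / 3) \<and>
          (\<forall>g. 0 < g \<and> g < \<gamma>p \<and> r\<^sup>2 + g ^ k = (1 - g) ^ k / 3 \<longrightarrow>
             (\<forall>\<gamma>\<in>{0..1}. rho_L n u v \<alpha> \<beta> \<gamma> \<in> stab_polytope n \<longleftrightarrow> (g \<le> \<gamma> \<and> \<gamma> \<le> \<gamma>p) \<or> \<gamma> = 1) \<and>
             (n = 3 \<and> k = 2 \<longrightarrow> g = (sqrt (3 - 6 * r\<^sup>2) - 1) / 2 \<and> \<gamma>p = 1 - sqrt 3 * r))))"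
proof -
  interpret Lset n k u v using assms(1-8) by unfold_locales
  have a: "\<alpha> > 0" and b: "\<beta> > 0" and ab: "\<alpha>\<^sup>2 + \<beta>\<^sup>2 = 1" and r: "r = \<alpha> / \<beta>"
    using assms by auto
  have P1: "\<forall>\<gamma>\<in>{0..1}.
        let q = 1 - \<gamma>; p0 = \<alpha>\<^sup>2 + \<beta>\<^sup>2 * \<gamma> ^ k; pL = \<beta>\<^sup>2 * q ^ k; cL = \<alpha> * \<beta> * sqrt q ^ k in
        (\<exists>\<Omega>. mat_eq (2^n) (rho_L n u v \<alpha> \<beta> \<gamma>)
                (\<lambda>x y. complex_of_real p0 * proj (ket 0) x y
                       + complex_of_real pL * proj (D_L u v) x y
                       + complex_of_real cL * (ket 0 x * cnj (D_L u v y) + D_L u v x * cnj (ket 0 y))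
                       + \<Omega> x y)
             \<and> stab_cone_on n {x. 1 \<le> hw n x \<and> hw n x \<le> k - 1} \<Omega>)
        \<and> (rho_L n u v \<alpha> \<beta> \<gamma> \<in> stab_polytope n \<longleftrightarrow> p0 \<ge> pL / 3 \<and> cL \<le> pL / sqrt 3)"
  proof
    fix \<gamma> :: real assume "\<gamma> \<in> {0..1}"
    then have g0: "0 \<le> \<gamma>" and g1: "\<gamma> \<le> 1" by auto
    show "let q = 1 - \<gamma>; p0 = \<alpha>\<^sup>2 + \<beta>\<^sup>2 * \<gamma> ^ k; pL = \<beta>\<^sup>2 * q ^ k; cL = \<alpha> * \<beta> * sqrt q ^ k in
        (\<exists>\<Omega>. mat_eq (2^n) (rho_L n u v \<alpha> \<beta> \<gamma>)
                (\<lambda>x y. complex_of_real p0 * proj (ket 0) x y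
                       + complex_of_real pL * proj (D_L u v) x y
                       + complex_of_real cL * (ket 0 x * cnj (D_L u v y) + D_L u v x * cnj (ket 0 y))
                       + \<Omega> x y)
             \<and> stab_cone_on n {x. 1 \<le> hw n x \<and> hw n x \<le> k - 1} \<Omega>)
        \<and> (rho_L n u v \<alpha> \<beta> \<gamma> \<in> stab_polytope n \<longleftrightarrow> p0 \<ge> pL / 3 \<and> cL \<le> pL / sqrt 3)"
      unfolding Let_def using decomp[OF g0 g1, of \<alpha> \<beta>] poly_iff[OF g0 g1 a b ab] by blast
  qed
  have P2: "0 < r \<and> r < 1 / sqrt 3 \<longrightarrow>
        (let \<gamma>p = 1 - (sqrt 3 * r) powr (2 / real k) in
          (\<exists>!g. 0 < g \<and> g < \<gamma>p \<and> r\<^sup>2 + g ^ k = (1 - g) ^ k / 3) \<and>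
          (\<forall>g. 0 < g \<and> g < \<gamma>p \<and> r\<^sup>2 + g ^ k = (1 - g) ^ k / 3 \<longrightarrow>
             (\<forall>\<gamma>\<in>{0..1}. rho_L n u v \<alpha> \<beta> \<gamma> \<in> stab_polytope n \<longleftrightarrow> (g \<le> \<gamma> \<and> \<gamma> \<le> \<gamma>p) \<or> \<gamma> = 1) \<and>
             (n = 3 \<and> k = 2 \<longrightarrow> g = (sqrt (3 - 6 * r\<^sup>2) - 1) / 2 \<and> \<gamma>p = 1 - sqrt 3 * r)))"
  proof (intro impI)
    assume "0 < r \<and> r < 1 / sqrt 3"
    then have r0: "0 < r" and r1: "r < 1 / sqrt 3" by auto
    note RP = real_part[OF k1 r0 r1]
    show "let \<gamma>p = 1 - (sqrt 3 * r) powr (2 / real k) in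
          (\<exists>!g. 0 < g \<and> g < \<gamma>p \<and> r\<^sup>2 + g ^ k = (1 - g) ^ k / 3) \<and>
          (\<forall>g. 0 < g \<and> g < \<gamma>p \<and> r\<^sup>2 + g ^ k = (1 - g) ^ k / 3 \<longrightarrow>
             (\<forall>\<gamma>\<in>{0..1}. rho_L n u v \<alpha> \<beta> \<gamma> \<in> stab_polytope n \<longleftrightarrow> (g \<le> \<gamma> \<and> \<gamma> \<le> \<gamma>p) \<or> \<gamma> = 1) \<and>
             (n = 3 \<and> k = 2 \<longrightarrow> g = (sqrt (3 - 6 * r\<^sup>2) - 1) / 2 \<and> \<gamma>p = 1 - sqrt 3 * r))"
      unfolding Let_def
    proof (intro conjI allI impI ballI)
      show "\<exists>!g. 0 < g \<and> g < 1 - (sqrt 3 * r) powr (2 / real k) \<and> r\<^sup>2 + g ^ k = (1 - g) ^ k / 3"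
        by (rule RP(1))
    next
      fix g \<gamma> :: real
      assume g: "0 < g \<and> g < 1 - (sqrt 3 * r) powr (2 / real k) \<and> r\<^sup>2 + g ^ k = (1 - g) ^ k / 3"
        and ga: "\<gamma> \<in> {0..1}"
      then have g0: "0 \<le> \<gamma>" and g1: "\<gamma> \<le> 1" by auto
      show "rho_L n u v \<alpha> \<beta> \<gamma> \<in> stab_polytope n \<longleftrightarrow> (g \<le> \<gamma> \<and> \<gamma> \<le> 1 - (sqrt 3 * r) powr (2 / real k)) \<or> \<gamma> = 1"
        unfolding poly_iff[OF g0 g1 a b ab] bridge[OF b r]
        using RP(2)[of g \<gamma>] g g0 g1 by blast
    next
      fix g :: real
      assume g: "0 < g \<and> g < 1 - (sqrt 3 * r) powr (2 / real k) \<and> r\<^sup>2 + g ^ k = (1 - g) ^ k / 3"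
        and nk: "n = 3 \<and> k = 2"
      show "g = (sqrt (3 - 6 * r\<^sup>2) - 1) / 2" using RP(3)[of g] g nk by blast
      show "1 - (sqrt 3 * r) powr (2 / real k) = 1 - sqrt 3 * r" using RP(3)[of g] g nk by blast
    qed
  qed
  show ?thesis using P1 P2 by blast
qed

end
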